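(* In the setting of the context (any constant $\kappa$), if $E^{(\mathcal H)}$ and $E^{(\mathcal M)}_a$ vanish on every level surface $\Sigma_\sigma$ (i.e. on all of $M$), then $$K^{ab}E^{(\mathcal{EVOL})}_{ab}=0\qquad\text{and}\qquad D^aE^{(\mathcal{EVOL})}_{ab}-\epsilon\,\dot n^aE^{(\mathcal{EVOL})}_{ab}=0.$$
   Context: $M$ is an $(n+1)$-dimensional ($n\ge 2$) smooth manifold with a smooth metric $g_{ab}$ of Euclidean or Lorentzian signature and Levi-Civita connection $\nabla_a$, foliated by the level surfaces $\Sigma_\sigma$ of a smooth function $\sigma$ with nowhere vanishing gradient. $n^a$ is the unit normal with $n^an_a=\epsilon\in\{-1,+1\}$; $h_{ab}=g_{ab}-\epsilon n_an_b$, ${h^a}_b={\delta^a}_b-\epsilon n^an_b$; $D_a$ is the Levi-Civita connection of $h_{ab}$; $K_{ab}={h^e}_a\nabla_en_b$ is the extrinsic curvature and $\dot n_a=n^e\nabla_en_a$. $\mathcal{G}_{ab}$ is a smooth symmetric tensor with $\nabla^a\mathcal{G}_{ab}=0$, $G_{ab}$ the Einstein tensor of $g_{ab}$, $E_{ab}=G_{ab}-\mathcal{G}_{ab}$, $E^{(\mathcal H)}=n^en^fE_{ef}$, $E^{(\mathcal M)}_b=n^e{h^f}_bE_{ef}$, and $E^{(\mathcal{EVOL})}_{ab}={h^e}_a{h^f}_bE_{ef}-\kappa h_{ab}E^{(\mathcal H)}$ for a constant $\kappa$. *)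

theory Defs
  imports "HOL-Analysis.Analysis"
begin

text \<open>Local coordinate rendering: the manifold M is represented by an open
coordinate domain U in real^'d (CARD('d) = n+1). Tensor fields are given by
their coordinate components; index positions are recorded in the names.\<close>

definition pd :: "'d::finite \<Rightarrow> (real^'d \<Rightarrow> real) \<Rightarrow> real^'d \<Rightarrow> real" where
  "pd i f x = deriv (\<lambda>t. f (x + t *\<^sub>R axis i 1)) 0"

fun iter_pd :: "'d::finite list \<Rightarrow> (real^'d \<Rightarrow> real) \<Rightarrow> real^'d \<Rightarrow> real" where
  "iter_pd [] f = f"
| "iter_pd (i # is) f = pd i (iter_pd is f)"

definition smooth_on :: "(real^'d::finite) set \<Rightarrow> (real^'d \<Rightarrow> real) \<Rightarrow> bool" where
  "smooth_on U f \<longleftrightarrow> (\<forall>is x. x \<in> U \<longrightarrow> iter_pd is f differentiable (at x))"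

definition qform :: "(real^'d \<Rightarrow> 'd::finite \<Rightarrow> 'd \<Rightarrow> real) \<Rightarrow> real^'d \<Rightarrow> real^'d \<Rightarrow> real^'d \<Rightarrow> real" where
  "qform g x v w = (\<Sum>a\<in>UNIV. \<Sum>b\<in>UNIV. g x a b * v $ a * w $ b)"

definition eucl_or_lorentz :: "(real^'d \<Rightarrow> 'd::finite \<Rightarrow> 'd \<Rightarrow> real) \<Rightarrow> real^'d \<Rightarrow> bool" where
  "eucl_or_lorentz g x \<longleftrightarrow>
     (\<forall>v. v \<noteq> 0 \<longrightarrow> qform g x v v > 0) \<or>
     (\<exists>v. qform g x v v < 0 \<and> (\<forall>w. w \<noteq> 0 \<and> qform g x v w = 0 \<longrightarrow> qform g x w w > 0))"

definition ginv :: "(real^'d \<Rightarrow> 'd::finite \<Rightarrow> 'd \<Rightarrow> real) \<Rightarrow> real^'d \<Rightarrow> 'd \<Rightarrow> 'd \<Rightarrow> real" where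
  "ginv g x a b = matrix_inv (\<chi> i j. g x i j) $ a $ b"

definition christoffel :: "(real^'d \<Rightarrow> 'd::finite \<Rightarrow> 'd \<Rightarrow> real) \<Rightarrow> real^'d \<Rightarrow> 'd \<Rightarrow> 'd \<Rightarrow> 'd \<Rightarrow> real" where
  "christoffel g x k i j = (1/2) * (\<Sum>l\<in>UNIV. ginv g x k l *
      (pd i (\<lambda>y. g y l j) x + pd j (\<lambda>y. g y l i) x - pd l (\<lambda>y. g y i j) x))"

definition riemann :: "(real^'d \<Rightarrow> 'd::finite \<Rightarrow> 'd \<Rightarrow> real) \<Rightarrow> real^'d \<Rightarrow> 'd \<Rightarrow> 'd \<Rightarrow> 'd \<Rightarrow> 'd \<Rightarrow> real" where
  "riemann g x r s m v =
     pd m (\<lambda>y. christoffel g y r v s) x - pd v (\<lambda>y. christoffel g y r m s) x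
     + (\<Sum>l\<in>UNIV. christoffel g x r m l * christoffel g x l v s)
     - (\<Sum>l\<in>UNIV. christoffel g x r v l * christoffel g x l m s)"

definition ricci :: "(real^'d \<Rightarrow> 'd::finite \<Rightarrow> 'd \<Rightarrow> real) \<Rightarrow> real^'d \<Rightarrow> 'd \<Rightarrow> 'd \<Rightarrow> real" where
  "ricci g x s v = (\<Sum>r\<in>UNIV. riemann g x r s r v)"

definition scalar_curv :: "(real^'d \<Rightarrow> 'd::finite \<Rightarrow> 'd \<Rightarrow> real) \<Rightarrow> real^'d \<Rightarrow> real" where
  "scalar_curv g x = (\<Sum>s\<in>UNIV. \<Sum>v\<in>UNIV. ginv g x s v * ricci g x s v)"

definition einstein :: "(real^'d \<Rightarrow> 'd::finite \<Rightarrow> 'd \<Rightarrow> real) \<Rightarrow> real^'d \<Rightarrow> 'd \<Rightarrow> 'd \<Rightarrow> real" where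
  "einstein g x a b = ricci g x a b - (1/2) * scalar_curv g x * g x a b"

definition cov1 :: "(real^'d \<Rightarrow> 'd::finite \<Rightarrow> 'd \<Rightarrow> real) \<Rightarrow> (real^'d \<Rightarrow> 'd \<Rightarrow> real) \<Rightarrow> real^'d \<Rightarrow> 'd \<Rightarrow> 'd \<Rightarrow> real" where
  "cov1 g w x c b = pd c (\<lambda>y. w y b) x - (\<Sum>d\<in>UNIV. christoffel g x d c b * w x d)"

definition cov2 :: "(real^'d \<Rightarrow> 'd::finite \<Rightarrow> 'd \<Rightarrow> real) \<Rightarrow> (real^'d \<Rightarrow> 'd \<Rightarrow> 'd \<Rightarrow> real) \<Rightarrow> real^'d \<Rightarrow> 'd \<Rightarrow> 'd \<Rightarrow> 'd \<Rightarrow> real" where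
  "cov2 g T x c a b = pd c (\<lambda>y. T y a b) x
     - (\<Sum>d\<in>UNIV. christoffel g x d c a * T x d b)
     - (\<Sum>d\<in>UNIV. christoffel g x d c b * T x a d)"

definition divg :: "(real^'d \<Rightarrow> 'd::finite \<Rightarrow> 'd \<Rightarrow> real) \<Rightarrow> (real^'d \<Rightarrow> 'd \<Rightarrow> 'd \<Rightarrow> real) \<Rightarrow> real^'d \<Rightarrow> 'd \<Rightarrow> real" where
  "divg g T x b = (\<Sum>a\<in>UNIV. \<Sum>c\<in>UNIV. ginv g x a c * cov2 g T x c a b)"

definition gradsq :: "(real^'d \<Rightarrow> 'd::finite \<Rightarrow> 'd \<Rightarrow> real) \<Rightarrow> (real^'d \<Rightarrow> real) \<Rightarrow> real^'d \<Rightarrow> real" where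
  "gradsq g \<sigma> x = (\<Sum>a\<in>UNIV. \<Sum>b\<in>UNIV. ginv g x a b * pd a \<sigma> x * pd b \<sigma> x)"

definition nlow :: "(real^'d \<Rightarrow> 'd::finite \<Rightarrow> 'd \<Rightarrow> real) \<Rightarrow> (real^'d \<Rightarrow> real) \<Rightarrow> real^'d \<Rightarrow> 'd \<Rightarrow> real" where
  "nlow g \<sigma> x a = pd a \<sigma> x / sqrt \<bar>gradsq g \<sigma> x\<bar>"

definition nup :: "(real^'d \<Rightarrow> 'd::finite \<Rightarrow> 'd \<Rightarrow> real) \<Rightarrow> (real^'d \<Rightarrow> real) \<Rightarrow> real^'d \<Rightarrow> 'd \<Rightarrow> real" where
  "nup g \<sigma> x a = (\<Sum>b\<in>UNIV. ginv g x a b * nlow g \<sigma> x b)"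

definition hmix :: "(real^'d \<Rightarrow> 'd::finite \<Rightarrow> 'd \<Rightarrow> real) \<Rightarrow> (real^'d \<Rightarrow> real) \<Rightarrow> real \<Rightarrow> real^'d \<Rightarrow> 'd \<Rightarrow> 'd \<Rightarrow> real" where
  "hmix g \<sigma> \<epsilon> x a b = (if a = b then 1 else 0) - \<epsilon> * nup g \<sigma> x a * nlow g \<sigma> x b"

definition hlow :: "(real^'d \<Rightarrow> 'd::finite \<Rightarrow> 'd \<Rightarrow> real) \<Rightarrow> (real^'d \<Rightarrow> real) \<Rightarrow> real \<Rightarrow> real^'d \<Rightarrow> 'd \<Rightarrow> 'd \<Rightarrow> real" where
  "hlow g \<sigma> \<epsilon> x a b = g x a b - \<epsilon> * nlow g \<sigma> x a * nlow g \<sigma> x b"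

definition hup :: "(real^'d \<Rightarrow> 'd::finite \<Rightarrow> 'd \<Rightarrow> real) \<Rightarrow> (real^'d \<Rightarrow> real) \<Rightarrow> real \<Rightarrow> real^'d \<Rightarrow> 'd \<Rightarrow> 'd \<Rightarrow> real" where
  "hup g \<sigma> \<epsilon> x a b = ginv g x a b - \<epsilon> * nup g \<sigma> x a * nup g \<sigma> x b"

definition extr :: "(real^'d \<Rightarrow> 'd::finite \<Rightarrow> 'd \<Rightarrow> real) \<Rightarrow> (real^'d \<Rightarrow> real) \<Rightarrow> real \<Rightarrow> real^'d \<Rightarrow> 'd \<Rightarrow> 'd \<Rightarrow> real" where
  "extr g \<sigma> \<epsilon> x a b = (\<Sum>e\<in>UNIV. hmix g \<sigma> \<epsilon> x e a * cov1 g (nlow g \<sigma>) x e b)"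

definition extr_up :: "(real^'d \<Rightarrow> 'd::finite \<Rightarrow> 'd \<Rightarrow> real) \<Rightarrow> (real^'d \<Rightarrow> real) \<Rightarrow> real \<Rightarrow> real^'d \<Rightarrow> 'd \<Rightarrow> 'd \<Rightarrow> real" where
  "extr_up g \<sigma> \<epsilon> x a b = (\<Sum>c\<in>UNIV. \<Sum>d\<in>UNIV. ginv g x a c * ginv g x b d * extr g \<sigma> \<epsilon> x c d)"

definition accel :: "(real^'d \<Rightarrow> 'd::finite \<Rightarrow> 'd \<Rightarrow> real) \<Rightarrow> (real^'d \<Rightarrow> real) \<Rightarrow> real^'d \<Rightarrow> 'd \<Rightarrow> real" where
  "accel g \<sigma> x a = (\<Sum>e\<in>UNIV. nup g \<sigma> x e * cov1 g (nlow g \<sigma>) x e a)"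

definition accel_up :: "(real^'d \<Rightarrow> 'd::finite \<Rightarrow> 'd \<Rightarrow> real) \<Rightarrow> (real^'d \<Rightarrow> real) \<Rightarrow> real^'d \<Rightarrow> 'd \<Rightarrow> real" where
  "accel_up g \<sigma> x a = (\<Sum>c\<in>UNIV. ginv g x a c * accel g \<sigma> x c)"

definition Eten :: "(real^'d \<Rightarrow> 'd::finite \<Rightarrow> 'd \<Rightarrow> real) \<Rightarrow> (real^'d \<Rightarrow> 'd \<Rightarrow> 'd \<Rightarrow> real) \<Rightarrow> real^'d \<Rightarrow> 'd \<Rightarrow> 'd \<Rightarrow> real" where
  "Eten g cG x a b = einstein g x a b - cG x a b"

definition E_H :: "(real^'d \<Rightarrow> 'd::finite \<Rightarrow> 'd \<Rightarrow> real) \<Rightarrow> (real^'d \<Rightarrow> 'd \<Rightarrow> 'd \<Rightarrow> real) \<Rightarrow> (real^'d \<Rightarrow> real) \<Rightarrow> real^'d \<Rightarrow> real" where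
  "E_H g cG \<sigma> x = (\<Sum>e\<in>UNIV. \<Sum>f\<in>UNIV. nup g \<sigma> x e * nup g \<sigma> x f * Eten g cG x e f)"

definition E_M :: "(real^'d \<Rightarrow> 'd::finite \<Rightarrow> 'd \<Rightarrow> real) \<Rightarrow> (real^'d \<Rightarrow> 'd \<Rightarrow> 'd \<Rightarrow> real) \<Rightarrow> (real^'d \<Rightarrow> real) \<Rightarrow> real \<Rightarrow> real^'d \<Rightarrow> 'd \<Rightarrow> real" where
  "E_M g cG \<sigma> \<epsilon> x b = (\<Sum>e\<in>UNIV. \<Sum>f\<in>UNIV. nup g \<sigma> x e * hmix g \<sigma> \<epsilon> x f b * Eten g cG x e f)"

definition E_EVOL :: "(real^'d \<Rightarrow> 'd::finite \<Rightarrow> 'd \<Rightarrow> real) \<Rightarrow> (real^'d \<Rightarrow> 'd \<Rightarrow> 'd \<Rightarrow> real) \<Rightarrow> (real^'d \<Rightarrow> real) \<Rightarrow> real \<Rightarrow> real \<Rightarrow> real^'d \<Rightarrow> 'd \<Rightarrow> 'd \<Rightarrow> real" where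
  "E_EVOL g cG \<sigma> \<epsilon> \<kappa> x a b =
     (\<Sum>e\<in>UNIV. \<Sum>f\<in>UNIV. hmix g \<sigma> \<epsilon> x e a * hmix g \<sigma> \<epsilon> x f b * Eten g cG x e f)
     - \<kappa> * hlow g \<sigma> \<epsilon> x a b * E_H g cG \<sigma> x"

text \<open>Induced (Levi-Civita of h) derivative of a spatial (0,2) tensor, in the
ambient form D_c T_{ab} = h^d_c h^e_a h^f_b nabla_d T_{ef}, and D^a T_{ab} = h^{ac} D_c T_{ab}.\<close>
definition Dspat :: "(real^'d \<Rightarrow> 'd::finite \<Rightarrow> 'd \<Rightarrow> real) \<Rightarrow> (real^'d \<Rightarrow> real) \<Rightarrow> real \<Rightarrow> (real^'d \<Rightarrow> 'd \<Rightarrow> 'd \<Rightarrow> real) \<Rightarrow> real^'d \<Rightarrow> 'd \<Rightarrow> 'd \<Rightarrow> 'd \<Rightarrow> real" where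
  "Dspat g \<sigma> \<epsilon> T x c a b = (\<Sum>d\<in>UNIV. \<Sum>e\<in>UNIV. \<Sum>f\<in>UNIV.
      hmix g \<sigma> \<epsilon> x d c * hmix g \<sigma> \<epsilon> x e a * hmix g \<sigma> \<epsilon> x f b * cov2 g T x d e f)"

definition Ddiv :: "(real^'d \<Rightarrow> 'd::finite \<Rightarrow> 'd \<Rightarrow> real) \<Rightarrow> (real^'d \<Rightarrow> real) \<Rightarrow> real \<Rightarrow> (real^'d \<Rightarrow> 'd \<Rightarrow> 'd \<Rightarrow> real) \<Rightarrow> real^'d \<Rightarrow> 'd \<Rightarrow> real" where
  "Ddiv g \<sigma> \<epsilon> T x b = (\<Sum>a\<in>UNIV. \<Sum>c\<in>UNIV. hup g \<sigma> \<epsilon> x a c * Dspat g \<sigma> \<epsilon> T x c a b)"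

end

theory Submission
  imports Defs
begin


lemma pd_has_derivative:
  assumes "(f has_derivative f') (at x)"
  shows "pd i f x = f' (axis i 1)"
proof -
  have h1: "((\<lambda>t::real. x + t *\<^sub>R axis i 1) has_derivative (\<lambda>t. t *\<^sub>R axis i 1)) (at 0)"
    by (auto intro!: derivative_eq_intros)
  have h2: "(f has_derivative f') (at ((\<lambda>t::real. x + t *\<^sub>R axis i 1) 0))" using assms by simp
  have "((f \<circ> (\<lambda>t::real. x + t *\<^sub>R axis i 1)) has_derivative (f' \<circ> (\<lambda>t. t *\<^sub>R axis i 1))) (at 0)"
    by (rule diff_chain_at[OF h1 h2])
  moreover have "f' \<circ> (\<lambda>t. t *\<^sub>R axis i 1) = (\<lambda>t. f' (axis i 1) * t)"
    using has_derivative_bounded_linear[OF assms]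
    by (auto simp: fun_eq_iff bounded_linear.linear linear_cmul)
  ultimately have "((\<lambda>t. f (x + t *\<^sub>R axis i 1)) has_real_derivative f' (axis i 1)) (at 0)"
    by (simp add: has_field_derivative_def o_def)
  then show ?thesis unfolding pd_def by (rule DERIV_imp_deriv)
qed

lemma pd_fd: "f differentiable (at x) \<Longrightarrow> pd i f x = frechet_derivative f (at x) (axis i 1)"
  by (rule pd_has_derivative) (simp add: frechet_derivative_works[symmetric])

lemma fdw: "f differentiable (at x) \<Longrightarrow> (f has_derivative frechet_derivative f (at x)) (at x)"
  by (simp add: frechet_derivative_works[symmetric])

lemma pd_const[simp]: "pd i (\<lambda>y. c) x = 0"
  by (rule trans[OF pd_has_derivative[of _ "\<lambda>_. 0"]]) (auto intro: has_derivative_const)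

lemma pd_add:
  assumes "f differentiable (at x)" "h differentiable (at x)"
  shows "pd i (\<lambda>y. f y + h y) x = pd i f x + pd i h x"
  using pd_has_derivative[OF has_derivative_add[OF fdw[OF assms(1)] fdw[OF assms(2)]]]
  by (simp add: pd_fd assms)

lemma pd_diff:
  assumes "f differentiable (at x)" "h differentiable (at x)"
  shows "pd i (\<lambda>y. f y - h y) x = pd i f x - pd i h x"
  using pd_has_derivative[OF has_derivative_diff[OF fdw[OF assms(1)] fdw[OF assms(2)]]]
  by (simp add: pd_fd assms)

lemma pd_mult:
  assumes "f differentiable (at x)" "h differentiable (at x)"
  shows "pd i (\<lambda>y. f y * h y) x = pd i f x * h x + f x * pd i h x"
  using pd_has_derivative[OF has_derivative_mult[OF fdw[OF assms(1)] fdw[OF assms(2)]]]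
  by (simp add: pd_fd assms)

lemma pd_cmult:
  assumes "f differentiable (at x)"
  shows "pd i (\<lambda>y. c * f y) x = c * pd i f x"
  using pd_has_derivative[OF has_derivative_mult_right[OF fdw[OF assms(1)]]]
  by (simp add: pd_fd assms)

lemma pd_minus:
  assumes "f differentiable (at x)"
  shows "pd i (\<lambda>y. - f y) x = - pd i f x"
  using pd_has_derivative[OF has_derivative_minus[OF fdw[OF assms(1)]]]
  by (simp add: pd_fd assms)

lemma pd_sum:
  assumes "finite A" "\<And>a. a \<in> A \<Longrightarrow> f a differentiable (at x)"
  shows "pd i (\<lambda>y. \<Sum>a\<in>A. f a y) x = (\<Sum>a\<in>A. pd i (f a) x)"
  using assms
proof (induction A rule: finite_induct)
  case empty then show ?case by simp
next
  case (insert a A)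
  have d1: "(\<lambda>y. \<Sum>a\<in>A. f a y) differentiable (at x)"
    using insert by (auto intro!: differentiable_sum)
  have "pd i (\<lambda>y. \<Sum>a\<in>insert a A. f a y) x = pd i (\<lambda>y. f a y + (\<Sum>a\<in>A. f a y)) x"
    using insert by simp
  also have "\<dots> = pd i (f a) x + pd i (\<lambda>y. \<Sum>a\<in>A. f a y) x"
    using pd_add[of "f a" x "\<lambda>y. \<Sum>a\<in>A. f a y"] insert d1 by simp
  finally show ?case using insert by simp
qed

lemma pd_local:
  assumes "open U" "x \<in> U" "\<And>y. y \<in> U \<Longrightarrow> f y = h y"
  shows "pd i f x = pd i h x"
proof -
  obtain r where r: "r > 0" "ball x r \<subseteq> U" using assms openE by blast
  have "eventually (\<lambda>t::real. f (x + t *\<^sub>R axis i 1) = h (x + t *\<^sub>R axis i 1)) (nhds 0)"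
  proof -
    have "eventually (\<lambda>t::real. t \<in> ball 0 r) (nhds 0)"
      using r by (intro eventually_nhds_in_open) auto
    then show ?thesis
    proof (rule eventually_mono)
      fix t :: real assume "t \<in> ball 0 r"
      then have "x + t *\<^sub>R axis i 1 \<in> ball x r" by (simp add: dist_norm)
      then show "f (x + t *\<^sub>R axis i 1) = h (x + t *\<^sub>R axis i 1)" using r assms(3) by blast
    qed
  qed
  then show ?thesis unfolding pd_def by (rule deriv_cong_ev) simp
qed

lemma diff_local:
  assumes "open U" "x \<in> U" "\<And>y. y \<in> U \<Longrightarrow> f y = h y" "f differentiable (at x)"
  shows "h differentiable (at x)"
  using assms unfolding differentiable_def
  using has_derivative_transform_within_open by blast

lemma iter_pd_local:
  assumes "open U" "\<And>y. y \<in> U \<Longrightarrow> f y = h y"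
  shows "y \<in> U \<Longrightarrow> iter_pd ks f y = iter_pd ks h y"
proof (induction ks arbitrary: y)
  case Nil then show ?case using assms by simp
next
  case (Cons i ks)
  then show ?case using pd_local[OF assms(1) Cons.prems, of "iter_pd ks f" "iter_pd ks h"] by simp
qed

lemma iter_pd_snoc: "iter_pd (ks @ [i]) f = iter_pd ks (pd i f)"
  by (induction ks) auto


definition smk :: "(real^'d::finite) set \<Rightarrow> nat \<Rightarrow> (real^'d \<Rightarrow> real) \<Rightarrow> bool" where
  "smk U k f \<longleftrightarrow> (\<forall>ks x. length ks \<le> k \<longrightarrow> x \<in> U \<longrightarrow> iter_pd ks f differentiable (at x))"

lemma smooth_smk: "smooth_on U f \<longleftrightarrow> (\<forall>k. smk U k f)"
  unfolding smooth_on_def smk_def by (metis le_refl)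

lemma smk_0: "smk U 0 f \<longleftrightarrow> (\<forall>x\<in>U. f differentiable (at x))"
  unfolding smk_def by auto

lemma smk_Suc: "smk U (Suc k) f \<longleftrightarrow> (\<forall>x\<in>U. f differentiable (at x)) \<and> (\<forall>i. smk U k (pd i f))"
proof
  assume a: "smk U (Suc k) f"
  show "(\<forall>x\<in>U. f differentiable (at x)) \<and> (\<forall>i. smk U k (pd i f))"
  proof
    show "\<forall>x\<in>U. f differentiable (at x)" using a unfolding smk_def
      by (metis iter_pd.simps(1) list.size(3) zero_le)
    show "\<forall>i. smk U k (pd i f)" using a unfolding smk_def
      by (metis iter_pd_snoc length_append_singleton not_less_eq_eq)
  qed
next
  assume a: "(\<forall>x\<in>U. f differentiable (at x)) \<and> (\<forall>i. smk U k (pd i f))"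
  show "smk U (Suc k) f" unfolding smk_def
  proof (intro allI impI)
    fix ks :: "'a list" and x assume l: "length ks \<le> Suc k" and x: "x \<in> U"
    show "iter_pd ks f differentiable (at x)"
    proof (cases ks rule: rev_cases)
      case Nil then show ?thesis using a x by simp
    next
      case (snoc js i)
      then show ?thesis using a x l unfolding smk_def by (simp add: iter_pd_snoc)
    qed
  qed
qed

lemma smk_mono: "smk U (Suc k) f \<Longrightarrow> smk U k f"
  unfolding smk_def by auto

lemma smk_diff: "smk U k f \<Longrightarrow> x \<in> U \<Longrightarrow> f differentiable (at x)"
  unfolding smk_def by (metis iter_pd.simps(1) list.size(3) zero_le)

lemma smk_local:
  assumes "open U" "\<And>y. y \<in> U \<Longrightarrow> f y = h y" "smk U k f"
  shows "smk U k h"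
  unfolding smk_def
proof (intro allI impI)
  fix ks :: "'a list" and x assume l: "length ks \<le> k" and x: "x \<in> U"
  show "iter_pd ks h differentiable (at x)"
    by (rule diff_local[OF assms(1) x iter_pd_local[OF assms(1,2)]])
       (use assms(3) l x in \<open>auto simp: smk_def\<close>)
qed

lemma smk_const: "smk U k (\<lambda>y. c)"
proof (induction k arbitrary: c)
  case 0 then show ?case by (simp add: smk_0)
next
  case (Suc k)
  have e: "pd i (\<lambda>y. c) = (\<lambda>y. 0)" for i by (simp add: fun_eq_iff)
  show ?case unfolding smk_Suc e using Suc by simp
qed

lemma smk_add:
  assumes "open U"
  shows "smk U k f \<Longrightarrow> smk U k h \<Longrightarrow> smk U k (\<lambda>y. f y + h y)"
proof (induction k arbitrary: f h)
  case 0 then show ?case by (simp add: smk_0 differentiable_add)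
next
  case (Suc k)
  show ?case unfolding smk_Suc
  proof (intro conjI ballI allI)
    fix x assume "x \<in> U" then show "(\<lambda>y. f y + h y) differentiable (at x)"
      using Suc.prems by (simp add: smk_Suc differentiable_add)
  next
    fix i
    have "smk U k (\<lambda>y. pd i f y + pd i h y)" using Suc by (simp add: smk_Suc)
    moreover have "y \<in> U \<Longrightarrow> pd i f y + pd i h y = pd i (\<lambda>y. f y + h y) y" for y
      using Suc.prems by (simp add: pd_add smk_diff)
    ultimately show "smk U k (pd i (\<lambda>y. f y + h y))"
      by (rule smk_local[OF assms, rotated])
  qed
qed

lemma smk_mult:
  assumes "open U"
  shows "smk U k f \<Longrightarrow> smk U k h \<Longrightarrow> smk U k (\<lambda>y. f y * h y)"
proof (induction k arbitrary: f h)
  case 0 then show ?case by (simp add: smk_0 differentiable_mult)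
next
  case (Suc k)
  show ?case unfolding smk_Suc
  proof (intro conjI ballI allI)
    fix x assume "x \<in> U" then show "(\<lambda>y. f y * h y) differentiable (at x)"
      using Suc.prems by (simp add: smk_Suc differentiable_mult)
  next
    fix i
    have a1: "smk U k (pd i f)" "smk U k (pd i h)" "smk U k f" "smk U k h"
      using Suc.prems smk_mono by (auto simp: smk_Suc)
    have "smk U k (\<lambda>y. pd i f y * h y + f y * pd i h y)"
      by (intro smk_add[OF assms] Suc.IH a1)
    moreover have "y \<in> U \<Longrightarrow> pd i f y * h y + f y * pd i h y = pd i (\<lambda>y. f y * h y) y" for y
      using Suc.prems by (simp add: pd_mult smk_diff)
    ultimately show "smk U k (pd i (\<lambda>y. f y * h y))"
      by (rule smk_local[OF assms, rotated])
  qed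
qed

lemma smooth_add: "open U \<Longrightarrow> smooth_on U f \<Longrightarrow> smooth_on U h \<Longrightarrow> smooth_on U (\<lambda>y. f y + h y)"
  by (simp add: smooth_smk smk_add)

lemma smooth_mult: "open U \<Longrightarrow> smooth_on U f \<Longrightarrow> smooth_on U h \<Longrightarrow> smooth_on U (\<lambda>y. f y * h y)"
  by (simp add: smooth_smk smk_mult)

lemma smooth_const: "smooth_on U (\<lambda>y. c)"
  by (simp add: smooth_smk smk_const)

lemma smooth_diffble: "smooth_on U f \<Longrightarrow> x \<in> U \<Longrightarrow> f differentiable (at x)"
  by (meson smk_diff smooth_smk)

lemma smooth_pd: "smooth_on U f \<Longrightarrow> smooth_on U (pd i f)"
  by (simp add: smooth_smk) (metis smk_Suc)

lemma smooth_local: "open U \<Longrightarrow> (\<And>y. y \<in> U \<Longrightarrow> f y = h y) \<Longrightarrow> smooth_on U f \<Longrightarrow> smooth_on U h"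
  by (meson smk_local smooth_smk)

lemma smooth_cmult: "open U \<Longrightarrow> smooth_on U f \<Longrightarrow> smooth_on U (\<lambda>y. c * f y)"
  using smooth_mult[OF _ smooth_const] by blast

lemma smooth_minus: "open U \<Longrightarrow> smooth_on U f \<Longrightarrow> smooth_on U (\<lambda>y. - f y)"
  using smooth_cmult[of U f "-1"] by simp

lemma smooth_diff: "open U \<Longrightarrow> smooth_on U f \<Longrightarrow> smooth_on U h \<Longrightarrow> smooth_on U (\<lambda>y. f y - h y)"
  using smooth_add[of U f "\<lambda>y. - h y"] smooth_minus[of U h] by simp

lemma smooth_sum: assumes "open U" "finite A" "\<And>a. a \<in> A \<Longrightarrow> smooth_on U (f a)" shows "smooth_on U (\<lambda>y. \<Sum>a\<in>A. f a y)"
  using assms(2,3) by (induction A rule: finite_induct) (auto simp: smooth_const intro!: smooth_add assms(1))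

lemma smooth_prod: assumes "open U" "finite A" "\<And>a. a \<in> A \<Longrightarrow> smooth_on U (f a)" shows "smooth_on U (\<lambda>y. \<Prod>a\<in>A. f a y)"
  using assms(2,3) by (induction A rule: finite_induct) (auto simp: smooth_const intro!: smooth_mult assms(1))

lemma inv_hasder:
  assumes "smooth_on U h" "y \<in> U" "h y \<noteq> 0"
  shows "((\<lambda>y. inverse (h y)) has_derivative
          (\<lambda>v. - (inverse (h y) * frechet_derivative h (at y) v * inverse (h y)))) (at y)"
  using assms(3) fdw[OF smooth_diffble[OF assms(1,2)]]
  by (auto intro!: derivative_eq_intros)

lemma smk_inverse:
  assumes "open U"
  shows "smooth_on U h \<Longrightarrow> (\<And>y. y \<in> U \<Longrightarrow> h y \<noteq> 0) \<Longrightarrow> smk U k (\<lambda>y. inverse (h y))"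
proof (induction k arbitrary: h)
  case 0 then show ?case using inv_hasder by (simp add: smk_0 differentiable_def) blast
next
  case (Suc k)
  show ?case unfolding smk_Suc
  proof (intro conjI ballI allI)
    fix x assume "x \<in> U" then show "(\<lambda>y. inverse (h y)) differentiable (at x)"
      using Suc.prems inv_hasder unfolding differentiable_def by blast
  next
    fix i
    have "smooth_on U (\<lambda>y. - pd i h y)" "smooth_on U (\<lambda>y. h y * h y)"
      using Suc.prems by (auto intro!: smooth_mult smooth_minus smooth_pd assms)
    then have "smk U k (\<lambda>y. (- pd i h y) * inverse (h y * h y))"
      using Suc.prems by (intro smk_mult[OF assms] Suc.IH) (auto simp: smooth_smk)
    moreover have "pd i (\<lambda>y. inverse (h y)) y = (- pd i h y) * inverse (h y * h y)" if y: "y \<in> U" for y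
    proof -
      from pd_has_derivative[OF inv_hasder[OF Suc.prems(1) y Suc.prems(2)[OF y]], of i] show ?thesis
        using Suc.prems(2)[OF y] pd_fd[OF smooth_diffble[OF Suc.prems(1) y], of i]
        by (simp add: field_simps)
    qed
    ultimately show "smk U k (pd i (\<lambda>y. inverse (h y)))"
      using smk_local[OF assms, of "\<lambda>y. - pd i h y * inverse (h y * h y)" "pd i (\<lambda>y. inverse (h y))" k]
      by metis
  qed
qed

lemma smooth_inverse: "open U \<Longrightarrow> smooth_on U h \<Longrightarrow> (\<And>y. y \<in> U \<Longrightarrow> h y \<noteq> 0) \<Longrightarrow> smooth_on U (\<lambda>y. inverse (h y))"
  by (simp add: smooth_smk smk_inverse)

lemma smooth_divide: "open U \<Longrightarrow> smooth_on U f \<Longrightarrow> smooth_on U h \<Longrightarrow> (\<And>y. y \<in> U \<Longrightarrow> h y \<noteq> 0) \<Longrightarrow> smooth_on U (\<lambda>y. f y / h y)"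
  using smooth_mult[OF _ _ smooth_inverse, of U f h] by (simp add: divide_inverse)


lemma line_deriv:
  assumes "(f has_derivative f') (at (p + t *\<^sub>R v))"
  shows "((\<lambda>s. f (p + s *\<^sub>R v)) has_real_derivative f' v) (at t)"
proof -
  have h1: "((\<lambda>s::real. p + s *\<^sub>R v) has_derivative (\<lambda>s. s *\<^sub>R v)) (at t)"
    by (auto intro!: derivative_eq_intros)
  have "((f \<circ> (\<lambda>s::real. p + s *\<^sub>R v)) has_derivative (f' \<circ> (\<lambda>s. s *\<^sub>R v))) (at t)"
    by (rule diff_chain_at[OF h1]) (simp add: assms)
  moreover have "f' \<circ> (\<lambda>s. s *\<^sub>R v) = (\<lambda>s. f' v * s)"
    using has_derivative_bounded_linear[OF assms]
    by (auto simp: fun_eq_iff bounded_linear.linear linear_cmul)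
  ultimately show ?thesis by (simp add: has_field_derivative_def o_def)
qed

lemma line_deriv_pd:
  assumes "f differentiable (at (p + t *\<^sub>R axis i 1))"
  shows "((\<lambda>s. f (p + s *\<^sub>R axis i 1)) has_real_derivative pd i f (p + t *\<^sub>R axis i 1)) (at t)"
  using line_deriv[OF fdw[OF assms]] pd_fd[OF assms] by simp

lemma alg_aux: "h > 0 \<Longrightarrow> N = h * P \<Longrightarrow> N / h\<^sup>2 - (A::real) = (P - h * A) / h"
  by (simp add: power2_eq_square field_simps)

lemma schwarz_key:
  assumes U: "open U" and f: "smooth_on U f" and x: "x \<in> U" and e: "e > 0"
  shows "\<exists>\<delta>>0. \<forall>h. 0 < h \<longrightarrow> h < \<delta> \<longrightarrow>
     \<bar>(f (x + h *\<^sub>R axis i 1 + h *\<^sub>R axis j 1) - f (x + h *\<^sub>R axis i 1) - f (x + h *\<^sub>R axis j 1) + f x) / h\<^sup>2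
       - pd j (pd i f) x\<bar> \<le> 3 * e"
proof -
  define u where "u = (axis i 1 :: real^'a)"
  define w where "w = (axis j 1 :: real^'a)"
  have nu: "norm u = 1" "norm w = 1" by (auto simp: u_def w_def)
  obtain r where r: "r > 0" "ball x r \<subseteq> U" using U x openE by blast
  define F where "F = pd i f"
  have Fs: "smooth_on U F" unfolding F_def by (rule smooth_pd[OF f])
  define F' where "F' = frechet_derivative F (at x)"
  have F'd: "(F has_derivative F') (at x)" unfolding F'_def by (rule fdw[OF smooth_diffble[OF Fs x]])
  have F'w: "F' w = pd j (pd i f) x"
    unfolding F'_def w_def F_def using pd_fd[OF smooth_diffble[OF Fs x]] F_def by simp
  have lin: "linear F'" using F'd has_derivative_linear by blast
  obtain d where d: "d > 0" "\<And>y. norm (y - x) < d \<Longrightarrow> \<bar>F y - F x - F' (y - x)\<bar> \<le> e * norm (y - x)"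
    using F'd e unfolding has_derivative_at_alt by (metis real_norm_def)
  show ?thesis
  proof (intro exI[of _ "min (d/2) (r/2)"] conjI allI impI)
    show "min (d/2) (r/2) > 0" using d r by simp
    fix h :: real assume h0: "0 < h" and hd: "h < min (d/2) (r/2)"
    define \<phi> where "\<phi> t = f (x + h *\<^sub>R w + t *\<^sub>R u) - f (x + t *\<^sub>R u)" for t
    have inU: "x + a *\<^sub>R w + t *\<^sub>R u \<in> U" if "0 \<le> t" "t \<le> h" "0 \<le> a" "a \<le> h" for t a
    proof -
      have "norm (a *\<^sub>R w + t *\<^sub>R u) \<le> a + t"
        using norm_triangle_ineq[of "a *\<^sub>R w" "t *\<^sub>R u"] nu that by simp
      moreover have "dist x (x + a *\<^sub>R w + t *\<^sub>R u) = norm (a *\<^sub>R w + t *\<^sub>R u)"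
        by (metis add.assoc add_diff_cancel_left' dist_commute dist_norm)
      ultimately have "dist x (x + a *\<^sub>R w + t *\<^sub>R u) < r" using that hd by simp
      then show ?thesis using r by auto
    qed
    have der: "DERIV \<phi> t :> F (x + h *\<^sub>R w + t *\<^sub>R u) - F (x + t *\<^sub>R u)" if "0 \<le> t" "t \<le> h" for t
    proof -
      have a1: "f differentiable (at (x + h *\<^sub>R w + t *\<^sub>R u))"
        using smooth_diffble[OF f inU[OF that, of h]] h0 by simp
      have a2: "f differentiable (at (x + t *\<^sub>R u))"
        using smooth_diffble[OF f inU[OF that, of 0]] h0 by simp
      show ?thesis unfolding \<phi>_def F_def u_def
        using line_deriv_pd[OF a1[unfolded u_def]] line_deriv_pd[OF a2[unfolded u_def]]
        by (intro derivative_intros) auto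
    qed
    obtain \<xi> where \<xi>: "0 < \<xi>" "\<xi> < h" "\<phi> h - \<phi> 0 = (h - 0) * (F (x + h *\<^sub>R w + \<xi> *\<^sub>R u) - F (x + \<xi> *\<^sub>R u))"
      using MVT2[OF h0 der] by auto
    define y1 where "y1 = x + h *\<^sub>R w + \<xi> *\<^sub>R u"
    define y2 where "y2 = x + \<xi> *\<^sub>R u"
    have n1: "norm (y1 - x) \<le> h + \<xi>"
      using norm_triangle_ineq[of "h *\<^sub>R w" "\<xi> *\<^sub>R u"] nu \<xi> h0 by (simp add: y1_def)
    have n2: "norm (y2 - x) = \<xi>" using nu \<xi> by (simp add: y2_def)
    have b1: "\<bar>F y1 - F x - F' (y1 - x)\<bar> \<le> e * norm (y1 - x)" using d(2)[of y1] n1 \<xi> hd by simp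
    have b2: "\<bar>F y2 - F x - F' (y2 - x)\<bar> \<le> e * norm (y2 - x)" using d(2)[of y2] n2 \<xi> hd by simp
    have "F' (y1 - x) - F' (y2 - x) = h * F' w"
      using lin by (simp add: y1_def y2_def linear_add linear_cmul)
    then have "\<bar>F y1 - F y2 - h * F' w\<bar> \<le> e * norm (y1 - x) + e * norm (y2 - x)"
      using b1 b2 by linarith
    also have "\<dots> \<le> e * (h + \<xi>) + e * \<xi>" using n1 n2 e by (intro add_mono mult_left_mono) auto
    also have "\<dots> \<le> 3 * e * h" using \<xi> e by (simp add: algebra_simps)
    finally have m: "\<bar>F y1 - F y2 - h * F' w\<bar> \<le> 3 * e * h" .
    have "f (x + h *\<^sub>R axis i 1 + h *\<^sub>R axis j 1) - f (x + h *\<^sub>R axis i 1) - f (x + h *\<^sub>R axis j 1) + f x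
          = h * (F y1 - F y2)"
      using \<xi>(3) unfolding \<phi>_def y1_def y2_def u_def w_def by (simp add: algebra_simps)
    then have "(f (x + h *\<^sub>R axis i 1 + h *\<^sub>R axis j 1) - f (x + h *\<^sub>R axis i 1) - f (x + h *\<^sub>R axis j 1) + f x) / h\<^sup>2
       - pd j (pd i f) x = (F y1 - F y2 - h * F' w) / h"
      using h0 F'w by (subst alg_aux) auto
    then have "\<bar>(f (x + h *\<^sub>R axis i 1 + h *\<^sub>R axis j 1) - f (x + h *\<^sub>R axis i 1) - f (x + h *\<^sub>R axis j 1) + f x) / h\<^sup>2
       - pd j (pd i f) x\<bar> = \<bar>F y1 - F y2 - h * F' w\<bar> / h"
      using h0 by simp
    also have "\<dots> \<le> 3 * e" using m h0 by (simp add: divide_le_eq mult.commute)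
    finally show "\<bar>(f (x + h *\<^sub>R axis i 1 + h *\<^sub>R axis j 1) - f (x + h *\<^sub>R axis i 1) - f (x + h *\<^sub>R axis j 1) + f x) / h\<^sup>2
       - pd j (pd i f) x\<bar> \<le> 3 * e" .
  qed
qed

lemma schwarz:
  assumes U: "open U" and f: "smooth_on U f" and x: "x \<in> U"
  shows "pd i (pd j f) x = pd j (pd i f) x"
proof -
  have "\<bar>pd i (pd j f) x - pd j (pd i f) x\<bar> \<le> 6 * e" if e: "e > 0" for e
  proof -
    obtain d1 where d1: "d1 > 0" "\<And>h. 0 < h \<Longrightarrow> h < d1 \<Longrightarrow>
     \<bar>(f (x + h *\<^sub>R axis i 1 + h *\<^sub>R axis j 1) - f (x + h *\<^sub>R axis i 1) - f (x + h *\<^sub>R axis j 1) + f x) / h\<^sup>2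
       - pd j (pd i f) x\<bar> \<le> 3 * e"
      using schwarz_key[OF U f x e, of i j] by blast
    obtain d2 where d2: "d2 > 0" "\<And>h. 0 < h \<Longrightarrow> h < d2 \<Longrightarrow>
     \<bar>(f (x + h *\<^sub>R axis j 1 + h *\<^sub>R axis i 1) - f (x + h *\<^sub>R axis j 1) - f (x + h *\<^sub>R axis i 1) + f x) / h\<^sup>2
       - pd i (pd j f) x\<bar> \<le> 3 * e"
      using schwarz_key[OF U f x e, of j i] by blast
    define h where "h = min d1 d2 / 2"
    have h: "0 < h" "h < d1" "h < d2" using d1 d2 by (auto simp: h_def)
    have eq: "x + h *\<^sub>R axis j 1 + h *\<^sub>R axis i 1 = x + h *\<^sub>R axis i 1 + h *\<^sub>R axis j 1"
      by (simp add: algebra_simps)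
    have nm: "f (x + h *\<^sub>R axis i 1 + h *\<^sub>R axis j 1) - f (x + h *\<^sub>R axis j 1) - f (x + h *\<^sub>R axis i 1) + f x
      = f (x + h *\<^sub>R axis i 1 + h *\<^sub>R axis j 1) - f (x + h *\<^sub>R axis i 1) - f (x + h *\<^sub>R axis j 1) + f x" by linarith
    show ?thesis using d1(2)[OF h(1,2)] d2(2)[OF h(1,3)] unfolding eq nm by linarith
  qed
  note six = this
  have "\<bar>pd i (pd j f) x - pd j (pd i f) x\<bar> \<le> 0 + e" if "e > 0" for e
  proof -
    have "\<bar>pd i (pd j f) x - pd j (pd i f) x\<bar> \<le> 6 * (e / 6)" using six[of "e/6"] that by simp
    then show ?thesis by simp
  qed
  then have "\<bar>pd i (pd j f) x - pd j (pd i f) x\<bar> \<le> 0" by (rule field_le_epsilon)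
  then show ?thesis by simp
qed




lemma smooth_det:
  assumes "open U" "\<And>i j. smooth_on U (F i j)"
  shows "smooth_on U (\<lambda>y. det (\<chi> i j. F i j y))"
  unfolding det_def
  by (auto intro!: smooth_sum smooth_mult smooth_prod smooth_const assms simp: finite_permutations)

lemma smooth_if_const: "(P \<Longrightarrow> smooth_on U f) \<Longrightarrow> (\<not> P \<Longrightarrow> smooth_on U h) \<Longrightarrow> smooth_on U (\<lambda>y. if P then f y else h y)"
  by (cases P) auto

lemma sum_delta_r[simp]: "(\<Sum>j\<in>UNIV. f j * (if j = b then 1 else 0)) = (f (b::'i::finite) :: 'a::comm_semiring_1)"
proof -
  have "(\<Sum>j\<in>UNIV. f j * (if j = b then 1 else 0)) = (\<Sum>j\<in>UNIV. if j = b then f j else 0)"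
    by (rule sum.cong) auto
  also have "\<dots> = f b" by simp
  finally show ?thesis .
qed

lemma sum_delta_l[simp]: "(\<Sum>j\<in>UNIV. (if j = b then 1 else 0) * f j) = (f (b::'i::finite) :: 'a::comm_semiring_1)"
  using sum_delta_r[of f b] by (simp add: mult.commute)

lemma sum_delta_r'[simp]: "(\<Sum>j\<in>UNIV. f j * (if b = j then 1 else 0)) = (f (b::'i::finite) :: 'a::comm_semiring_1)"
proof -
  have "(\<Sum>j\<in>UNIV. f j * (if b = j then 1 else 0)) = (\<Sum>j\<in>UNIV. if j = b then f j else 0)"
    by (rule sum.cong) auto
  also have "\<dots> = f b" by simp
  finally show ?thesis .
qed

lemma sum_delta_l'[simp]: "(\<Sum>j\<in>UNIV. (if b = j then 1 else 0) * f j) = (f (b::'i::finite) :: 'a::comm_semiring_1)"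
  using sum_delta_r'[of f b] by (simp add: mult.commute)

definition gmat :: "(real^'d \<Rightarrow> 'd::finite \<Rightarrow> 'd \<Rightarrow> real) \<Rightarrow> real^'d \<Rightarrow> real^'d^'d" where
  "gmat g x = (\<chi> i j. g x i j)"

locale geo =
  fixes U :: "(real^'d::finite) set" and g :: "real^'d \<Rightarrow> 'd \<Rightarrow> 'd \<Rightarrow> real"
  assumes U_open: "open U"
    and g_smooth: "\<And>a b. smooth_on U (\<lambda>x. g x a b)"
    and g_sym: "\<And>x a b. x \<in> U \<Longrightarrow> g x a b = g x b a"
    and g_sig: "\<And>x. x \<in> U \<Longrightarrow> eucl_or_lorentz g x"
begin

lemma g_ker:
  assumes x: "x \<in> U" and v: "gmat g x *v v = 0"
  shows "v = 0"
proof (rule ccontr)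
  assume nz: "v \<noteq> 0"
  have row: "(\<Sum>b\<in>UNIV. g x a b * v $ b) = 0" for a
    using v by (simp add: gmat_def matrix_vector_mult_def vec_eq_iff)
  have q0: "qform g x w v = 0" for w
  proof -
    have "qform g x w v = (\<Sum>a\<in>UNIV. w $ a * (\<Sum>b\<in>UNIV. g x a b * v $ b))"
      unfolding qform_def by (simp add: sum_distrib_left mult_ac)
    then show ?thesis using row by simp
  qed
  from g_sig[OF x] show False unfolding eucl_or_lorentz_def
    using q0 nz by (metis less_irrefl)
qed

lemma g_invertible: "x \<in> U \<Longrightarrow> invertible (gmat g x)"
  using g_ker invertible_left_inverse matrix_left_invertible_ker by blast

lemma g_det_nz: "x \<in> U \<Longrightarrow> det (gmat g x) \<noteq> 0"
  using g_invertible invertible_det_nz by blast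

lemma ginv_mat: "x \<in> U \<Longrightarrow> gmat g x ** matrix_inv (gmat g x) = mat 1 \<and> matrix_inv (gmat g x) ** gmat g x = mat 1"
  using g_invertible[unfolded invertible_def] unfolding matrix_inv_def by (rule someI_ex)

lemma ginv_gmat: "ginv g x a b = matrix_inv (gmat g x) $ a $ b"
  by (simp add: ginv_def gmat_def)

lemma g_ginv: "x \<in> U \<Longrightarrow> (\<Sum>b\<in>UNIV. g x a b * ginv g x b c) = (if a = c then 1 else 0)"
  using ginv_mat[of x] unfolding ginv_gmat
  by (auto simp: vec_eq_iff matrix_matrix_mult_def mat_def gmat_def)

lemma ginv_g: "x \<in> U \<Longrightarrow> (\<Sum>b\<in>UNIV. ginv g x a b * g x b c) = (if a = c then 1 else 0)"
  using ginv_mat[of x] unfolding ginv_gmat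
  by (auto simp: vec_eq_iff matrix_matrix_mult_def mat_def gmat_def)

lemma gmat_sym: "x \<in> U \<Longrightarrow> transpose (gmat g x) = gmat g x"
  using g_sym by (simp add: vec_eq_iff transpose_def gmat_def)

lemma ginv_sym: "x \<in> U \<Longrightarrow> ginv g x a b = ginv g x b a"
proof -
  assume x: "x \<in> U"
  define M where "M = gmat g x"
  define X where "X = matrix_inv M"
  have 1: "M ** X = mat 1" "X ** M = mat 1" using ginv_mat[OF x] by (auto simp: M_def X_def)
  have "transpose X ** M = transpose (transpose M ** X)" by (simp add: matrix_transpose_mul)
  also have "\<dots> = mat 1" using 1 gmat_sym[OF x] by (simp add: M_def transpose_mat)
  finally have 2: "transpose X ** M = mat 1" .
  have "transpose X = transpose X ** (M ** X)" using 1 by simp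
  also have "\<dots> = X" using 2 by (simp add: matrix_mul_assoc)
  finally have "transpose X = X" .
  then show ?thesis unfolding ginv_gmat X_def M_def by (metis transpose_def vec_lambda_beta)
qed

lemma ginv_cramer:
  assumes x: "x \<in> U"
  shows "ginv g x a b = det (\<chi> i j. if j = a then (if i = b then 1 else 0) else g x i j) / det (\<chi> i j. g x i j)"
proof -
  define M where "M = gmat g x"
  define X where "X = matrix_inv M"
  have 1: "M ** X = mat 1" using ginv_mat[OF x] by (auto simp: M_def X_def)
  have "M *v (X *v axis b 1) = axis b 1" using 1 by (simp add: matrix_vector_mul_assoc)
  then have "X *v axis b 1 = (\<chi> k. det (\<chi> i j. if j = k then (axis b 1) $ i else M $ i $ j) / det M)"
    using cramer[OF g_det_nz[OF x, folded M_def]] by blast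
  then have "(X *v axis b 1) $ a = det (\<chi> i j. if j = a then (axis b 1) $ i else M $ i $ j) / det M" by simp
  moreover have "(X *v axis b 1) $ a = X $ a $ b"
    by (simp add: matrix_vector_mult_def axis_def)
  ultimately have "X $ a $ b = det (\<chi> i j. if j = a then (axis b 1) $ i else M $ i $ j) / det M" by simp
  moreover have "(\<chi> i j. if j = a then (axis b 1) $ i else M $ i $ j) = (\<chi> i j. if j = a then (if i = b then 1 else 0) else g x i j)"
    by (simp add: vec_eq_iff axis_def M_def gmat_def)
  moreover have "M = (\<chi> i j. g x i j)" by (simp add: M_def gmat_def)
  ultimately show ?thesis unfolding ginv_gmat X_def M_def by (simp add: gmat_def)
qed

lemma ginv_smooth: "smooth_on U (\<lambda>x. ginv g x a b)"
proof (rule smooth_local[OF U_open])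
  show "smooth_on U (\<lambda>x. det (\<chi> i j. if j = a then (if i = b then 1 else 0) else g x i j) / det (\<chi> i j. g x i j))"
    using g_det_nz unfolding gmat_def
    by (intro smooth_divide U_open smooth_det smooth_if_const) (auto intro: g_smooth smooth_const)
  show "\<And>y. y \<in> U \<Longrightarrow> det (\<chi> i j. if j = a then (if i = b then 1 else 0) else g y i j) / det (\<chi> i j. g y i j) = ginv g y a b"
    using ginv_cramer by simp
qed

end




lemma bianchi_alg:
  fixes G :: "'i::finite \<Rightarrow> 'i \<Rightarrow> 'i \<Rightarrow> real" and dG :: "'i \<Rightarrow> 'i \<Rightarrow> 'i \<Rightarrow> 'i \<Rightarrow> real"
    and ddG :: "'i \<Rightarrow> 'i \<Rightarrow> 'i \<Rightarrow> 'i \<Rightarrow> 'i \<Rightarrow> real"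
    and R :: "'i \<Rightarrow> 'i \<Rightarrow> 'i \<Rightarrow> 'i \<Rightarrow> real" and dR cR :: "'i \<Rightarrow> 'i \<Rightarrow> 'i \<Rightarrow> 'i \<Rightarrow> 'i \<Rightarrow> real"
  assumes ddGs: "\<And>f e k i j. ddG f e k i j = ddG e f k i j"
    and Gs: "\<And>k i j. G k i j = G k j i"
    and R_def: "\<And>r s m v. R r s m v = dG m r v s - dG v r m s + (\<Sum>l\<in>UNIV. G r m l * G l v s) - (\<Sum>l\<in>UNIV. G r v l * G l m s)"
    and dR_def: "\<And>e r s m v. dR e r s m v = ddG e m r v s - ddG e v r m s
        + (\<Sum>l\<in>UNIV. dG e r m l * G l v s + G r m l * dG e l v s)
        - (\<Sum>l\<in>UNIV. dG e r v l * G l m s + G r v l * dG e l m s)"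
    and cR_def: "\<And>e r s m v. cR e r s m v = dR e r s m v + (\<Sum>l\<in>UNIV. G r e l * R l s m v)
        - (\<Sum>l\<in>UNIV. G l e s * R r l m v) - (\<Sum>l\<in>UNIV. G l e m * R r s l v) - (\<Sum>l\<in>UNIV. G l e v * R r s m l)"
  shows "cR e r s m v + cR m r s v e + cR v r s e m = 0"
proof -
  define T1 where "T1 e m v = (\<Sum>l\<in>UNIV. \<Sum>k\<in>UNIV. G r e l * G l m k * G k v s)" for e m v
  define T2 where "T2 e m v = (\<Sum>l\<in>UNIV. \<Sum>k\<in>UNIV. G r e l * G l v k * G k m s)" for e m v
  define T3 where "T3 e m v = (\<Sum>l\<in>UNIV. \<Sum>k\<in>UNIV. G l e s * G r m k * G k v l)" for e m v
  define T4 where "T4 e m v = (\<Sum>l\<in>UNIV. \<Sum>k\<in>UNIV. G l e s * G r v k * G k m l)" for e m v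
  define Si where "Si e m v l = dG e r m l * G l v s + G r m l * dG e l v s - dG e r v l * G l m s - G r v l * dG e l m s
     + G r e l * dG m l v s - G r e l * dG v l m s - G l e s * dG m r v l + G l e s * dG v r m l" for e m v l
  define Bi where "Bi e m v l = G l e m * R r s l v + G l e v * R r s m l" for e m v l
  define DD where "DD e m v = ddG e m r v s - ddG e v r m s" for e m v
  have h1: "(\<Sum>l\<in>UNIV. G r e l * R l s m v) = (\<Sum>l\<in>UNIV. G r e l * dG m l v s - G r e l * dG v l m s) + T1 e m v - T2 e m v" for e m v
    by (simp add: R_def T1_def T2_def algebra_simps sum.distrib sum_subtractf sum_distrib_left)
  have h2: "(\<Sum>l\<in>UNIV. G l e s * R r l m v) = (\<Sum>l\<in>UNIV. G l e s * dG m r v l - G l e s * dG v r m l) + T3 e m v - T4 e m v" for e m v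
    by (simp add: R_def T3_def T4_def algebra_simps sum.distrib sum_subtractf sum_distrib_left)
  have dec: "cR e r s m v = DD e m v + (\<Sum>l\<in>UNIV. Si e m v l) + T1 e m v - T2 e m v - T3 e m v + T4 e m v - (\<Sum>l\<in>UNIV. Bi e m v l)" for e m v
    unfolding cR_def dR_def h1 h2 DD_def Si_def Bi_def
    by (simp add: sum.distrib sum_subtractf algebra_simps)
  have DDz: "DD e m v + DD m v e + DD v e m = 0"
    using ddGs[of m e r v s] ddGs[of v e r m s] ddGs[of v m r e s] by (simp add: DD_def)
  have Sz: "(\<Sum>l\<in>UNIV. Si e m v l) + (\<Sum>l\<in>UNIV. Si m v e l) + (\<Sum>l\<in>UNIV. Si v e m l) = 0"
  proof -
    have "\<And>l. Si e m v l + Si m v e l + Si v e m l = 0" by (simp add: Si_def algebra_simps)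
    then show ?thesis by (simp add: sum.distrib[symmetric])
  qed
  have Rant: "\<And>r s m v. R r s m v = - R r s v m" by (simp add: R_def)
  have Bz: "(\<Sum>l\<in>UNIV. Bi e m v l) + (\<Sum>l\<in>UNIV. Bi m v e l) + (\<Sum>l\<in>UNIV. Bi v e m l) = 0"
  proof -
    have "Bi e m v l + Bi m v e l + Bi v e m l = 0" for l
      unfolding Bi_def using Gs[of l e m] Gs[of l e v] Gs[of l m v] Rant[of r s l v] Rant[of r s m l] Rant[of r s l e]
      by (simp add: algebra_simps)
    then show ?thesis by (simp add: sum.distrib[symmetric])
  qed
  have T3e: "T3 a b c = T1 b c a" for a b c
    unfolding T1_def T3_def by (subst sum.swap) (simp add: mult_ac)
  have T4e: "T4 a b c = T2 c a b" for a b c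
    unfolding T2_def T4_def by (subst sum.swap) (simp add: mult_ac)
  show ?thesis unfolding dec T3e T4e using DDz Sz Bz by linarith
qed




lemma s3_acb: "(\<Sum>a\<in>A. \<Sum>b\<in>B. \<Sum>c\<in>C. F a b c) = (\<Sum>a\<in>A. \<Sum>c\<in>C. \<Sum>b\<in>B. F a b c)"
  by (rule sum.cong[OF refl]) (rule sum.swap)
lemma s3_bac: "(\<Sum>a\<in>A. \<Sum>b\<in>B. \<Sum>c\<in>C. F a b c) = (\<Sum>b\<in>B. \<Sum>a\<in>A. \<Sum>c\<in>C. F a b c)"
  by (rule sum.swap)
lemma s3_bca: "(\<Sum>a\<in>A. \<Sum>b\<in>B. \<Sum>c\<in>C. F a b c) = (\<Sum>b\<in>B. \<Sum>c\<in>C. \<Sum>a\<in>A. F a b c)"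
  by (subst s3_bac) (rule sum.cong[OF refl], rule sum.swap)
lemma s3_cab: "(\<Sum>a\<in>A. \<Sum>b\<in>B. \<Sum>c\<in>C. F a b c) = (\<Sum>c\<in>C. \<Sum>a\<in>A. \<Sum>b\<in>B. F a b c)"
  by (subst s3_acb) (rule sum.swap)
lemma s3_cba: "(\<Sum>a\<in>A. \<Sum>b\<in>B. \<Sum>c\<in>C. F a b c) = (\<Sum>c\<in>C. \<Sum>b\<in>B. \<Sum>a\<in>A. F a b c)"
  by (subst s3_bca) (rule sum.swap)

lemma CL1:
  fixes G :: "'i::finite \<Rightarrow> 'i \<Rightarrow> 'i \<Rightarrow> real" and gi T :: "'i \<Rightarrow> 'i \<Rightarrow> real"
    and dgi dT :: "'i \<Rightarrow> 'i \<Rightarrow> 'i \<Rightarrow> real"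
  assumes dgi: "\<And>c a b. dgi c a b = - (\<Sum>d\<in>UNIV. G a c d * gi d b) - (\<Sum>d\<in>UNIV. G b c d * gi a d)"
  shows "(\<Sum>a\<in>UNIV. \<Sum>b\<in>UNIV. dgi c a b * T a b + gi a b * dT c a b)
       = (\<Sum>a\<in>UNIV. \<Sum>b\<in>UNIV. gi a b * (dT c a b - (\<Sum>l\<in>UNIV. G l c a * T l b) - (\<Sum>l\<in>UNIV. G l c b * T a l)))"
proof -
  have L1: "(\<Sum>a\<in>UNIV. \<Sum>b\<in>UNIV. dgi c a b * T a b) =
     - (\<Sum>a\<in>UNIV. \<Sum>b\<in>UNIV. \<Sum>d\<in>UNIV. G a c d * gi d b * T a b) - (\<Sum>a\<in>UNIV. \<Sum>b\<in>UNIV. \<Sum>d\<in>UNIV. G b c d * gi a d * T a b)"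
    by (simp add: dgi algebra_simps sum_distrib_right sum_distrib_left sum_subtractf sum_negf sum.distrib)
  have L2: "(\<Sum>a\<in>UNIV. \<Sum>b\<in>UNIV. \<Sum>d\<in>UNIV. G a c d * gi d b * T a b) = (\<Sum>a\<in>UNIV. \<Sum>b\<in>UNIV. \<Sum>l\<in>UNIV. gi a b * G l c a * T l b)"
    by (subst s3_cba) (simp add: mult_ac)
  have L3: "(\<Sum>a\<in>UNIV. \<Sum>b\<in>UNIV. \<Sum>d\<in>UNIV. G b c d * gi a d * T a b) = (\<Sum>a\<in>UNIV. \<Sum>b\<in>UNIV. \<Sum>l\<in>UNIV. gi a b * G l c b * T a l)"
    by (subst s3_acb) (simp add: mult_ac)
  have r: "(\<Sum>a\<in>UNIV. \<Sum>b\<in>UNIV. gi a b * (dT c a b - (\<Sum>l\<in>UNIV. G l c a * T l b) - (\<Sum>l\<in>UNIV. G l c b * T a l)))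
     = (\<Sum>a\<in>UNIV. \<Sum>b\<in>UNIV. gi a b * dT c a b) - (\<Sum>a\<in>UNIV. \<Sum>b\<in>UNIV. \<Sum>l\<in>UNIV. gi a b * G l c a * T l b)
       - (\<Sum>a\<in>UNIV. \<Sum>b\<in>UNIV. \<Sum>l\<in>UNIV. gi a b * G l c b * T a l)"
    by (simp add: algebra_simps sum.distrib sum_subtractf sum_distrib_left)
  have l: "(\<Sum>a\<in>UNIV. \<Sum>b\<in>UNIV. dgi c a b * T a b + gi a b * dT c a b)
     = (\<Sum>a\<in>UNIV. \<Sum>b\<in>UNIV. dgi c a b * T a b) + (\<Sum>a\<in>UNIV. \<Sum>b\<in>UNIV. gi a b * dT c a b)"
    by (simp add: sum.distrib)
  show ?thesis using l r L1 L2 L3 by linarith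
qed


lemma CL2:
  fixes G :: "'i::finite \<Rightarrow> 'i \<Rightarrow> 'i \<Rightarrow> real" and gi T :: "'i \<Rightarrow> 'i \<Rightarrow> real"
    and dgi dT :: "'i \<Rightarrow> 'i \<Rightarrow> 'i \<Rightarrow> real"
  assumes dgi: "\<And>c a b. dgi c a b = - (\<Sum>d\<in>UNIV. G a c d * gi d b) - (\<Sum>d\<in>UNIV. G b c d * gi a d)"
  shows "(\<Sum>p\<in>UNIV. dgi c r p * T p v + gi r p * dT c p v) + (\<Sum>l\<in>UNIV. G r c l * (\<Sum>p\<in>UNIV. gi l p * T p v))
           - (\<Sum>l\<in>UNIV. G l c v * (\<Sum>p\<in>UNIV. gi r p * T p l))
       = (\<Sum>p\<in>UNIV. gi r p * (dT c p v - (\<Sum>l\<in>UNIV. G l c p * T l v) - (\<Sum>l\<in>UNIV. G l c v * T p l)))"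
proof -
  have A1: "(\<Sum>p\<in>UNIV. dgi c r p * T p v) = - (\<Sum>p\<in>UNIV. \<Sum>d\<in>UNIV. G r c d * gi d p * T p v) - (\<Sum>p\<in>UNIV. \<Sum>d\<in>UNIV. G p c d * gi r d * T p v)"
    by (simp add: dgi algebra_simps sum_distrib_right sum_distrib_left sum_subtractf sum_negf sum.distrib)
  have A3: "(\<Sum>l\<in>UNIV. G r c l * (\<Sum>p\<in>UNIV. gi l p * T p v)) = (\<Sum>p\<in>UNIV. \<Sum>d\<in>UNIV. G r c d * gi d p * T p v)"
    by (subst sum.swap) (simp add: sum_distrib_left mult_ac)
  have A4: "(\<Sum>l\<in>UNIV. G l c v * (\<Sum>p\<in>UNIV. gi r p * T p l)) = (\<Sum>p\<in>UNIV. \<Sum>l\<in>UNIV. gi r p * G l c v * T p l)"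
    by (subst sum.swap) (simp add: sum_distrib_left mult_ac)
  have B2: "(\<Sum>p\<in>UNIV. \<Sum>d\<in>UNIV. G p c d * gi r d * T p v) = (\<Sum>p\<in>UNIV. \<Sum>l\<in>UNIV. gi r p * G l c p * T l v)"
    by (subst sum.swap) (simp add: mult_ac)
  have r: "(\<Sum>p\<in>UNIV. gi r p * (dT c p v - (\<Sum>l\<in>UNIV. G l c p * T l v) - (\<Sum>l\<in>UNIV. G l c v * T p l)))
     = (\<Sum>p\<in>UNIV. gi r p * dT c p v) - (\<Sum>p\<in>UNIV. \<Sum>l\<in>UNIV. gi r p * G l c p * T l v) - (\<Sum>p\<in>UNIV. \<Sum>l\<in>UNIV. gi r p * G l c v * T p l)"
    by (simp add: algebra_simps sum.distrib sum_subtractf sum_distrib_left)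
  have l: "(\<Sum>p\<in>UNIV. dgi c r p * T p v + gi r p * dT c p v) = (\<Sum>p\<in>UNIV. dgi c r p * T p v) + (\<Sum>p\<in>UNIV. gi r p * dT c p v)"
    by (simp add: sum.distrib)
  show ?thesis using l r A1 A3 A4 B2 by linarith
qed

lemma CL3:
  fixes G :: "'i::finite \<Rightarrow> 'i \<Rightarrow> 'i \<Rightarrow> real" and gi :: "'i \<Rightarrow> 'i \<Rightarrow> real"
    and dgi :: "'i \<Rightarrow> 'i \<Rightarrow> 'i \<Rightarrow> real" and T :: "'i \<Rightarrow> 'i \<Rightarrow> 'i \<Rightarrow> 'i \<Rightarrow> real"
    and dT :: "'i \<Rightarrow> 'i \<Rightarrow> 'i \<Rightarrow> 'i \<Rightarrow> 'i \<Rightarrow> real"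
  assumes dgi: "\<And>c a b. dgi c a b = - (\<Sum>d\<in>UNIV. G a c d * gi d b) - (\<Sum>d\<in>UNIV. G b c d * gi a d)"
  shows "(\<Sum>e\<in>UNIV. \<Sum>s\<in>UNIV. dgi c e s * T r s v e + gi e s * dT c r s v e)
      + (\<Sum>l\<in>UNIV. G r c l * (\<Sum>e\<in>UNIV. \<Sum>s\<in>UNIV. gi e s * T l s v e))
      - (\<Sum>l\<in>UNIV. G l c v * (\<Sum>e\<in>UNIV. \<Sum>s\<in>UNIV. gi e s * T r s l e))
   = (\<Sum>e\<in>UNIV. \<Sum>s\<in>UNIV. gi e s * (dT c r s v e + (\<Sum>l\<in>UNIV. G r c l * T l s v e)
        - (\<Sum>l\<in>UNIV. G l c s * T r l v e) - (\<Sum>l\<in>UNIV. G l c v * T r s l e) - (\<Sum>l\<in>UNIV. G l c e * T r s v l)))"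
proof -
  have A1: "(\<Sum>e\<in>UNIV. \<Sum>s\<in>UNIV. dgi c e s * T r s v e) =
     - (\<Sum>e\<in>UNIV. \<Sum>s\<in>UNIV. \<Sum>d\<in>UNIV. G e c d * gi d s * T r s v e) - (\<Sum>e\<in>UNIV. \<Sum>s\<in>UNIV. \<Sum>d\<in>UNIV. G s c d * gi e d * T r s v e)"
    by (simp add: dgi algebra_simps sum_distrib_right sum_distrib_left sum_subtractf sum_negf sum.distrib)
  have B1: "(\<Sum>e\<in>UNIV. \<Sum>s\<in>UNIV. \<Sum>d\<in>UNIV. G e c d * gi d s * T r s v e) = (\<Sum>e\<in>UNIV. \<Sum>s\<in>UNIV. \<Sum>l\<in>UNIV. gi e s * G l c e * T r s v l)"
    by (subst s3_cba) (simp add: mult_ac)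
  have B2: "(\<Sum>e\<in>UNIV. \<Sum>s\<in>UNIV. \<Sum>d\<in>UNIV. G s c d * gi e d * T r s v e) = (\<Sum>e\<in>UNIV. \<Sum>s\<in>UNIV. \<Sum>l\<in>UNIV. gi e s * G l c s * T r l v e)"
    by (subst s3_acb) (simp add: mult_ac)
  have A3: "(\<Sum>l\<in>UNIV. G r c l * (\<Sum>e\<in>UNIV. \<Sum>s\<in>UNIV. gi e s * T l s v e)) = (\<Sum>e\<in>UNIV. \<Sum>s\<in>UNIV. \<Sum>l\<in>UNIV. gi e s * G r c l * T l s v e)"
  proof -
    have "(\<Sum>l\<in>UNIV. G r c l * (\<Sum>e\<in>UNIV. \<Sum>s\<in>UNIV. gi e s * T l s v e)) = (\<Sum>l\<in>UNIV. \<Sum>e\<in>UNIV. \<Sum>s\<in>UNIV. gi e s * G r c l * T l s v e)"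
      by (simp add: sum_distrib_left mult_ac)
    also have "\<dots> = (\<Sum>e\<in>UNIV. \<Sum>s\<in>UNIV. \<Sum>l\<in>UNIV. gi e s * G r c l * T l s v e)" by (rule s3_bca)
    finally show ?thesis .
  qed
  have A4: "(\<Sum>l\<in>UNIV. G l c v * (\<Sum>e\<in>UNIV. \<Sum>s\<in>UNIV. gi e s * T r s l e)) = (\<Sum>e\<in>UNIV. \<Sum>s\<in>UNIV. \<Sum>l\<in>UNIV. gi e s * G l c v * T r s l e)"
  proof -
    have "(\<Sum>l\<in>UNIV. G l c v * (\<Sum>e\<in>UNIV. \<Sum>s\<in>UNIV. gi e s * T r s l e)) = (\<Sum>l\<in>UNIV. \<Sum>e\<in>UNIV. \<Sum>s\<in>UNIV. gi e s * G l c v * T r s l e)"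
      by (simp add: sum_distrib_left mult_ac)
    also have "\<dots> = (\<Sum>e\<in>UNIV. \<Sum>s\<in>UNIV. \<Sum>l\<in>UNIV. gi e s * G l c v * T r s l e)" by (rule s3_bca)
    finally show ?thesis .
  qed
  have r: "(\<Sum>e\<in>UNIV. \<Sum>s\<in>UNIV. gi e s * (dT c r s v e + (\<Sum>l\<in>UNIV. G r c l * T l s v e)
        - (\<Sum>l\<in>UNIV. G l c s * T r l v e) - (\<Sum>l\<in>UNIV. G l c v * T r s l e) - (\<Sum>l\<in>UNIV. G l c e * T r s v l)))
     = (\<Sum>e\<in>UNIV. \<Sum>s\<in>UNIV. gi e s * dT c r s v e) + (\<Sum>e\<in>UNIV. \<Sum>s\<in>UNIV. \<Sum>l\<in>UNIV. gi e s * G r c l * T l s v e)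
       - (\<Sum>e\<in>UNIV. \<Sum>s\<in>UNIV. \<Sum>l\<in>UNIV. gi e s * G l c s * T r l v e)
       - (\<Sum>e\<in>UNIV. \<Sum>s\<in>UNIV. \<Sum>l\<in>UNIV. gi e s * G l c v * T r s l e)
       - (\<Sum>e\<in>UNIV. \<Sum>s\<in>UNIV. \<Sum>l\<in>UNIV. gi e s * G l c e * T r s v l)"
    by (simp add: algebra_simps sum.distrib sum_subtractf sum_distrib_left)
  have l: "(\<Sum>e\<in>UNIV. \<Sum>s\<in>UNIV. dgi c e s * T r s v e + gi e s * dT c r s v e)
     = (\<Sum>e\<in>UNIV. \<Sum>s\<in>UNIV. dgi c e s * T r s v e) + (\<Sum>e\<in>UNIV. \<Sum>s\<in>UNIV. gi e s * dT c r s v e)"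
    by (simp add: sum.distrib)
  show ?thesis using l r A1 B1 B2 A3 A4 by linarith
qed


lemma contracted_bianchi_alg:
  fixes G :: "'i::finite \<Rightarrow> 'i \<Rightarrow> 'i \<Rightarrow> real" and dG :: "'i \<Rightarrow> 'i \<Rightarrow> 'i \<Rightarrow> 'i \<Rightarrow> real"
    and ddG :: "'i \<Rightarrow> 'i \<Rightarrow> 'i \<Rightarrow> 'i \<Rightarrow> 'i \<Rightarrow> real"
    and R :: "'i \<Rightarrow> 'i \<Rightarrow> 'i \<Rightarrow> 'i \<Rightarrow> real" and dR cR :: "'i \<Rightarrow> 'i \<Rightarrow> 'i \<Rightarrow> 'i \<Rightarrow> 'i \<Rightarrow> real"
    and g gi Ric E :: "'i \<Rightarrow> 'i \<Rightarrow> real" and dg dgi dRic dE :: "'i \<Rightarrow> 'i \<Rightarrow> 'i \<Rightarrow> real"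
    and Scal :: real and dScal :: "'i \<Rightarrow> real"
  assumes ddGs: "\<And>f e k i j. ddG f e k i j = ddG e f k i j"
    and Gs: "\<And>k i j. G k i j = G k j i"
    and R_def: "\<And>r s m v. R r s m v = dG m r v s - dG v r m s + (\<Sum>l\<in>UNIV. G r m l * G l v s) - (\<Sum>l\<in>UNIV. G r v l * G l m s)"
    and dR_def: "\<And>e r s m v. dR e r s m v = ddG e m r v s - ddG e v r m s
        + (\<Sum>l\<in>UNIV. dG e r m l * G l v s + G r m l * dG e l v s)
        - (\<Sum>l\<in>UNIV. dG e r v l * G l m s + G r v l * dG e l m s)"
    and cR_def: "\<And>e r s m v. cR e r s m v = dR e r s m v + (\<Sum>l\<in>UNIV. G r e l * R l s m v)
        - (\<Sum>l\<in>UNIV. G l e s * R r l m v) - (\<Sum>l\<in>UNIV. G l e m * R r s l v) - (\<Sum>l\<in>UNIV. G l e v * R r s m l)"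
    and gis: "\<And>a b. gi a b = gi b a"
    and ginv_g: "\<And>a c. (\<Sum>b\<in>UNIV. gi a b * g b c) = (if a = c then 1 else 0)"
    and mc: "\<And>c a b. dg c a b = (\<Sum>d\<in>UNIV. G d c a * g d b) + (\<Sum>d\<in>UNIV. G d c b * g a d)"
    and dgi: "\<And>c a b. dgi c a b = - (\<Sum>d\<in>UNIV. G a c d * gi d b) - (\<Sum>d\<in>UNIV. G b c d * gi a d)"
    and Ric_def: "\<And>s v. Ric s v = (\<Sum>r\<in>UNIV. R r s r v)"
    and dRic_def: "\<And>e s v. dRic e s v = (\<Sum>r\<in>UNIV. dR e r s r v)"
    and Scal_def: "Scal = (\<Sum>s\<in>UNIV. \<Sum>v\<in>UNIV. gi s v * Ric s v)"
    and dScal_def: "\<And>c. dScal c = (\<Sum>s\<in>UNIV. \<Sum>v\<in>UNIV. dgi c s v * Ric s v + gi s v * dRic c s v)"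
    and E_def: "\<And>a b. E a b = Ric a b - 1/2 * Scal * g a b"
    and dE_def: "\<And>c a b. dE c a b = dRic c a b - (1/2 * dScal c * g a b + 1/2 * Scal * dg c a b)"
    and Q0: "\<And>l v. (\<Sum>e\<in>UNIV. \<Sum>s\<in>UNIV. gi e s * R l s v e) = (\<Sum>p\<in>UNIV. gi l p * Ric p v)"
    and dQ: "\<And>r v. (\<Sum>e\<in>UNIV. \<Sum>s\<in>UNIV. dgi r e s * R r s v e + gi e s * dR r r s v e)
                 = (\<Sum>p\<in>UNIV. dgi r r p * Ric p v + gi r p * dRic r p v)"
  shows "(\<Sum>a\<in>UNIV. \<Sum>c\<in>UNIV. gi a c * (dE c a b - (\<Sum>d\<in>UNIV. G d c a * E d b) - (\<Sum>d\<in>UNIV. G d c b * E a d))) = 0"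
proof -
  define cRic where "cRic e s v = dRic e s v - (\<Sum>l\<in>UNIV. G l e s * Ric l v) - (\<Sum>l\<in>UNIV. G l e v * Ric s l)" for e s v
  have tr: "(\<Sum>r\<in>UNIV. cR e r s r v) = cRic e s v" for e s v
  proof -
    have a1: "(\<Sum>r\<in>UNIV. \<Sum>l\<in>UNIV. G l e s * R r l r v) = (\<Sum>l\<in>UNIV. G l e s * Ric l v)"
      by (subst sum.swap) (simp add: Ric_def sum_distrib_left)
    have a2: "(\<Sum>r\<in>UNIV. \<Sum>l\<in>UNIV. G l e v * R r s r l) = (\<Sum>l\<in>UNIV. G l e v * Ric s l)"
      by (subst sum.swap) (simp add: Ric_def sum_distrib_left)
    have a3: "(\<Sum>r\<in>UNIV. \<Sum>l\<in>UNIV. G l e r * R r s l v) = (\<Sum>r\<in>UNIV. \<Sum>l\<in>UNIV. G r e l * R l s r v)"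
      by (rule sum.swap)
    have "(\<Sum>r\<in>UNIV. cR e r s r v) = dRic e s v + (\<Sum>r\<in>UNIV. \<Sum>l\<in>UNIV. G r e l * R l s r v)
        - (\<Sum>r\<in>UNIV. \<Sum>l\<in>UNIV. G l e s * R r l r v) - (\<Sum>r\<in>UNIV. \<Sum>l\<in>UNIV. G l e r * R r s l v)
        - (\<Sum>r\<in>UNIV. \<Sum>l\<in>UNIV. G l e v * R r s r l)"
      by (simp add: cR_def dRic_def sum.distrib sum_subtractf)
    then show ?thesis unfolding cRic_def using a1 a2 a3 by linarith
  qed
  have Rant: "R r s m v = - R r s v m" for r s m v by (simp add: R_def)
  have dRant: "dR e r s m v = - dR e r s v m" for e r s m v by (simp add: dR_def)
  have cRant: "cR e r s m v = - cR e r s v m" for e r s m v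
  proof -
    have s1: "(\<Sum>l\<in>UNIV. G r e l * R l s v m) = - (\<Sum>l\<in>UNIV. G r e l * R l s m v)"
      by (subst Rant) (simp add: sum_negf)
    have s2: "(\<Sum>l\<in>UNIV. G l e s * R r l v m) = - (\<Sum>l\<in>UNIV. G l e s * R r l m v)"
      by (subst Rant) (simp add: sum_negf)
    have s3: "(\<Sum>l\<in>UNIV. G l e v * R r s l m) = - (\<Sum>l\<in>UNIV. G l e v * R r s m l)"
      by (subst Rant) (simp add: sum_negf)
    have s4: "(\<Sum>l\<in>UNIV. G l e m * R r s v l) = - (\<Sum>l\<in>UNIV. G l e m * R r s l v)"
      by (subst Rant) (simp add: sum_negf)
    show ?thesis unfolding cR_def using dRant[of e r s m v] s1 s2 s3 s4 by linarith
  qed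
  have bian: "cR e r s m v + cR m r s v e + cR v r s e m = 0" for e r s m v
    by (rule bianchi_alg[OF ddGs Gs R_def dR_def cR_def])
  have CB: "cRic e s v + (\<Sum>r\<in>UNIV. cR r r s v e) - cRic v s e = 0" for e s v
  proof -
    have "(\<Sum>r\<in>UNIV. cR e r s r v + cR r r s v e + cR v r s e r) = 0" using bian by simp
    moreover have "(\<Sum>r\<in>UNIV. cR v r s e r) = - cRic v s e"
      using tr[of v s e] cRant[of v _ s e] by (simp add: sum_negf)
    ultimately show ?thesis using tr[of e s v] by (simp add: sum.distrib)
  qed
  define X1 where "X1 v = (\<Sum>e\<in>UNIV. \<Sum>s\<in>UNIV. gi e s * cRic e s v)" for v
  define X2 where "X2 v = (\<Sum>e\<in>UNIV. \<Sum>s\<in>UNIV. gi e s * (\<Sum>r\<in>UNIV. cR r r s v e))" for v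
  define X3 where "X3 v = (\<Sum>e\<in>UNIV. \<Sum>s\<in>UNIV. gi e s * cRic v s e)" for v
  have X123: "X1 v + X2 v - X3 v = 0" for v
  proof -
    have "(\<Sum>e\<in>UNIV. \<Sum>s\<in>UNIV. gi e s * (cRic e s v + (\<Sum>r\<in>UNIV. cR r r s v e) - cRic v s e)) = 0"
      using CB by simp
    then show ?thesis unfolding X1_def X2_def X3_def
      by (simp only: distrib_left right_diff_distrib sum.distrib sum_subtractf)
  qed
  have X3e: "X3 v = dScal v" for v
  proof -
    have "dScal v = (\<Sum>a\<in>UNIV. \<Sum>b\<in>UNIV. gi a b * cRic v a b)"
      unfolding dScal_def cRic_def by (rule CL1[OF dgi])
    also have "\<dots> = X3 v" unfolding X3_def by (subst sum.swap) (simp add: gis)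
    finally show ?thesis by simp
  qed
  have X2e: "X2 v = X1 v" for v
  proof -
    have "X2 v = (\<Sum>r\<in>UNIV. \<Sum>e\<in>UNIV. \<Sum>s\<in>UNIV. gi e s * cR r r s v e)"
      unfolding X2_def by (simp add: sum_distrib_left s3_cab[of "\<lambda>e s r. gi e s * cR r r s v e"])
    also have "\<dots> = (\<Sum>r\<in>UNIV. \<Sum>p\<in>UNIV. gi r p * cRic r p v)"
    proof (rule sum.cong[OF refl])
      fix r
      have "(\<Sum>e\<in>UNIV. \<Sum>s\<in>UNIV. gi e s * cR r r s v e)
         = (\<Sum>e\<in>UNIV. \<Sum>s\<in>UNIV. dgi r e s * R r s v e + gi e s * dR r r s v e)
           + (\<Sum>l\<in>UNIV. G r r l * (\<Sum>e\<in>UNIV. \<Sum>s\<in>UNIV. gi e s * R l s v e))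
           - (\<Sum>l\<in>UNIV. G l r v * (\<Sum>e\<in>UNIV. \<Sum>s\<in>UNIV. gi e s * R r s l e))"
        unfolding cR_def by (rule CL3[OF dgi, symmetric])
      also have "\<dots> = (\<Sum>p\<in>UNIV. dgi r r p * Ric p v + gi r p * dRic r p v)
           + (\<Sum>l\<in>UNIV. G r r l * (\<Sum>p\<in>UNIV. gi l p * Ric p v))
           - (\<Sum>l\<in>UNIV. G l r v * (\<Sum>p\<in>UNIV. gi r p * Ric p l))"
        by (simp only: dQ Q0)
      also have "\<dots> = (\<Sum>p\<in>UNIV. gi r p * cRic r p v)"
        unfolding cRic_def by (rule CL2[OF dgi])
      finally show "(\<Sum>e\<in>UNIV. \<Sum>s\<in>UNIV. gi e s * cR r r s v e) = (\<Sum>p\<in>UNIV. gi r p * cRic r p v)" .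
    qed
    also have "\<dots> = X1 v" unfolding X1_def by simp
    finally show ?thesis .
  qed
  have pw: "dE c a b - (\<Sum>d\<in>UNIV. G d c a * E d b) - (\<Sum>d\<in>UNIV. G d c b * E a d) = cRic c a b - 1/2 * dScal c * g a b" for a b c
  proof -
    have e1: "(\<Sum>d\<in>UNIV. G d c a * E d b) = (\<Sum>d\<in>UNIV. G d c a * Ric d b) - 1/2 * Scal * (\<Sum>d\<in>UNIV. G d c a * g d b)"
      by (simp add: E_def right_diff_distrib sum_subtractf sum_distrib_left mult_ac)
    have e2: "(\<Sum>d\<in>UNIV. G d c b * E a d) = (\<Sum>d\<in>UNIV. G d c b * Ric a d) - 1/2 * Scal * (\<Sum>d\<in>UNIV. G d c b * g a d)"
      by (simp add: E_def right_diff_distrib sum_subtractf sum_distrib_left mult_ac)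
    show ?thesis unfolding e1 e2 dE_def cRic_def mc by (simp add: algebra_simps)
  qed
  have "(\<Sum>a\<in>UNIV. \<Sum>c\<in>UNIV. gi a c * (dE c a b - (\<Sum>d\<in>UNIV. G d c a * E d b) - (\<Sum>d\<in>UNIV. G d c b * E a d)))
      = (\<Sum>a\<in>UNIV. \<Sum>c\<in>UNIV. gi a c * cRic c a b) - 1/2 * (\<Sum>c\<in>UNIV. dScal c * (\<Sum>a\<in>UNIV. gi c a * g a b))"
  proof -
    have "(\<Sum>a\<in>UNIV. \<Sum>c\<in>UNIV. gi a c * (dE c a b - (\<Sum>d\<in>UNIV. G d c a * E d b) - (\<Sum>d\<in>UNIV. G d c b * E a d)))
        = (\<Sum>a\<in>UNIV. \<Sum>c\<in>UNIV. gi a c * cRic c a b - 1/2 * (gi a c * dScal c * g a b))"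
      by (simp only: pw) (simp add: algebra_simps)
    also have "\<dots> = (\<Sum>a\<in>UNIV. \<Sum>c\<in>UNIV. gi a c * cRic c a b) - 1/2 * (\<Sum>a\<in>UNIV. \<Sum>c\<in>UNIV. gi a c * dScal c * g a b)"
      by (simp only: sum_subtractf sum_distrib_left)
    also have "(\<Sum>a\<in>UNIV. \<Sum>c\<in>UNIV. gi a c * dScal c * g a b) = (\<Sum>c\<in>UNIV. dScal c * (\<Sum>a\<in>UNIV. gi c a * g a b))"
      by (subst sum.swap) (simp add: sum_distrib_left gis mult_ac)
    finally show ?thesis .
  qed
  also have "\<dots> = X1 b - 1/2 * dScal b"
    unfolding X1_def ginv_g by (subst sum.swap) (simp add: gis)
  also have "\<dots> = 0" using X123[of b] X2e[of b] X3e[of b] by simp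
  finally show ?thesis .
qed




lemma contr_gi:
  fixes g gi :: "'i::finite \<Rightarrow> 'i \<Rightarrow> real"
  assumes gs: "\<And>a b. g a b = g b a" and g_gi: "\<And>a c. (\<Sum>b\<in>UNIV. g a b * gi b c) = (if a = c then 1 else 0)"
  shows "(\<Sum>d\<in>UNIV. (\<Sum>l\<in>UNIV. gi d l * F l) * g d b) = F b"
proof -
  have "(\<Sum>d\<in>UNIV. (\<Sum>l\<in>UNIV. gi d l * F l) * g d b) = (\<Sum>d\<in>UNIV. \<Sum>l\<in>UNIV. g b d * gi d l * F l)"
    by (simp add: sum_distrib_right sum_distrib_left gs mult_ac)
  also have "\<dots> = (\<Sum>l\<in>UNIV. (\<Sum>d\<in>UNIV. g b d * gi d l) * F l)"
    by (subst sum.swap) (simp add: sum_distrib_right)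
  also have "\<dots> = F b" by (simp add: g_gi)
  finally show ?thesis .
qed

lemma mc_alg:
  fixes g gi :: "'i::finite \<Rightarrow> 'i \<Rightarrow> real" and dg G :: "'i \<Rightarrow> 'i \<Rightarrow> 'i \<Rightarrow> real"
  assumes gs: "\<And>a b. g a b = g b a" and g_gi: "\<And>a c. (\<Sum>b\<in>UNIV. g a b * gi b c) = (if a = c then 1 else 0)"
    and dgs: "\<And>c a b. dg c a b = dg c b a"
    and G_def: "\<And>k i j. G k i j = 1/2 * (\<Sum>l\<in>UNIV. gi k l * (dg i l j + dg j l i - dg l i j))"
  shows "dg c a b = (\<Sum>d\<in>UNIV. G d c a * g d b) + (\<Sum>d\<in>UNIV. G d c b * g a d)"
proof -
  have aux: "(\<Sum>d\<in>UNIV. G d i j * g d b) = 1/2 * (dg i b j + dg j b i - dg b i j)" for i j b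
  proof -
    have "(\<Sum>d\<in>UNIV. G d i j * g d b) = 1/2 * (\<Sum>d\<in>UNIV. (\<Sum>l\<in>UNIV. gi d l * (dg i l j + dg j l i - dg l i j)) * g d b)"
      by (simp add: G_def sum_distrib_left mult_ac)
    also have "\<dots> = 1/2 * (dg i b j + dg j b i - dg b i j)"
      by (simp only: contr_gi[OF gs g_gi])
    finally show ?thesis .
  qed
  have "(\<Sum>d\<in>UNIV. G d c b * g a d) = (\<Sum>d\<in>UNIV. G d c b * g d a)" by (simp add: gs)
  then show ?thesis using aux[of c a b] aux[of c b a] dgs[of c b a] dgs[of a b c] dgs[of b a c] by simp
qed

lemma dgi_alg:
  fixes g gi :: "'i::finite \<Rightarrow> 'i \<Rightarrow> real" and dg dgi G :: "'i \<Rightarrow> 'i \<Rightarrow> 'i \<Rightarrow> real"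
  assumes gs: "\<And>a b. g a b = g b a" and gis: "\<And>a b. gi a b = gi b a"
    and g_gi: "\<And>a c. (\<Sum>b\<in>UNIV. g a b * gi b c) = (if a = c then 1 else 0)"
    and gi_g: "\<And>a c. (\<Sum>b\<in>UNIV. gi a b * g b c) = (if a = c then 1 else 0)"
    and mc: "\<And>c a b. dg c a b = (\<Sum>d\<in>UNIV. G d c a * g d b) + (\<Sum>d\<in>UNIV. G d c b * g a d)"
    and dd: "\<And>c p b. (\<Sum>q\<in>UNIV. dg c p q * gi q b + g p q * dgi c q b) = 0"
  shows "dgi c a b = - (\<Sum>d\<in>UNIV. G a c d * gi d b) - (\<Sum>d\<in>UNIV. G b c d * gi a d)"
proof -
  have "dgi c a b = (\<Sum>p\<in>UNIV. (\<Sum>q\<in>UNIV. gi a q * g q p) * dgi c p b)" by (simp add: gi_g)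
  also have "\<dots> = (\<Sum>q\<in>UNIV. gi a q * (\<Sum>p\<in>UNIV. g q p * dgi c p b))"
    by (simp add: sum_distrib_left sum_distrib_right mult_ac) (rule sum.swap)
  also have "\<dots> = (\<Sum>q\<in>UNIV. gi a q * (- (\<Sum>p\<in>UNIV. dg c q p * gi p b)))"
  proof -
    have "(\<Sum>p\<in>UNIV. g q p * dgi c p b) = - (\<Sum>p\<in>UNIV. dg c q p * gi p b)" for q
      using dd[of c q b] by (simp add: sum.distrib eq_neg_iff_add_eq_0 add.commute)
    then show ?thesis by simp
  qed
  also have "\<dots> = - (\<Sum>q\<in>UNIV. \<Sum>p\<in>UNIV. gi a q * dg c q p * gi p b)"
    by (simp add: sum_distrib_left sum_negf mult_ac)
  also have "(\<Sum>q\<in>UNIV. \<Sum>p\<in>UNIV. gi a q * dg c q p * gi p b)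
     = (\<Sum>q\<in>UNIV. \<Sum>p\<in>UNIV. \<Sum>d\<in>UNIV. gi a q * G d c q * g d p * gi p b)
       + (\<Sum>q\<in>UNIV. \<Sum>p\<in>UNIV. \<Sum>d\<in>UNIV. gi a q * G d c p * g q d * gi p b)"
    by (simp add: mc algebra_simps sum.distrib sum_distrib_left sum_distrib_right)
  also have "(\<Sum>q\<in>UNIV. \<Sum>p\<in>UNIV. \<Sum>d\<in>UNIV. gi a q * G d c q * g d p * gi p b) = (\<Sum>d\<in>UNIV. G b c d * gi a d)"
  proof -
    have "(\<Sum>q\<in>UNIV. \<Sum>p\<in>UNIV. \<Sum>d\<in>UNIV. gi a q * G d c q * g d p * gi p b)
        = (\<Sum>q\<in>UNIV. \<Sum>d\<in>UNIV. gi a q * G d c q * (\<Sum>p\<in>UNIV. g d p * gi p b))"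
      by (subst s3_acb) (simp add: sum_distrib_left mult_ac)
    also have "\<dots> = (\<Sum>q\<in>UNIV. gi a q * G b c q)" by (simp add: g_gi)
    finally show ?thesis by (simp add: mult_ac)
  qed
  also have "(\<Sum>q\<in>UNIV. \<Sum>p\<in>UNIV. \<Sum>d\<in>UNIV. gi a q * G d c p * g q d * gi p b) = (\<Sum>d\<in>UNIV. G a c d * gi d b)"
  proof -
    have "(\<Sum>q\<in>UNIV. \<Sum>p\<in>UNIV. \<Sum>d\<in>UNIV. gi a q * G d c p * g q d * gi p b)
        = (\<Sum>p\<in>UNIV. \<Sum>d\<in>UNIV. (\<Sum>q\<in>UNIV. gi a q * g q d) * G d c p * gi p b)"
      by (subst s3_bca) (simp add: sum_distrib_right sum_distrib_left mult_ac)
    also have "\<dots> = (\<Sum>p\<in>UNIV. G a c p * gi p b)" by (simp add: gi_g mult.assoc)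
    finally show ?thesis .
  qed
  finally show ?thesis by simp
qed


lemma antisym_alg:
  fixes g :: "'i::finite \<Rightarrow> 'i \<Rightarrow> real" and dg G :: "'i \<Rightarrow> 'i \<Rightarrow> 'i \<Rightarrow> real"
    and dG ddg R :: "'i \<Rightarrow> 'i \<Rightarrow> 'i \<Rightarrow> 'i \<Rightarrow> real"
  assumes gs: "\<And>a b. g a b = g b a"
    and mc: "\<And>c a b. dg c a b = (\<Sum>d\<in>UNIV. G d c a * g d b) + (\<Sum>d\<in>UNIV. G d c b * g a d)"
    and ddgs: "\<And>m c a b. ddg m c a b = ddg c m a b"
    and H: "\<And>m c a b. ddg m c a b = (\<Sum>d\<in>UNIV. dG m d c a * g d b + G d c a * dg m d b)
                                 + (\<Sum>d\<in>UNIV. dG m d c b * g a d + G d c b * dg m a d)"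
    and R_def: "\<And>r s m v. R r s m v = dG m r v s - dG v r m s + (\<Sum>l\<in>UNIV. G r m l * G l v s) - (\<Sum>l\<in>UNIV. G r v l * G l m s)"
  shows "(\<Sum>d\<in>UNIV. g b d * R d a m v) + (\<Sum>d\<in>UNIV. g a d * R d b m v) = 0"
proof -
  define P1 where "P1 = (\<Sum>d\<in>UNIV. dG m d v a * g d b)"
  define P2 where "P2 = (\<Sum>d\<in>UNIV. dG v d m a * g d b)"
  define P3 where "P3 = (\<Sum>d\<in>UNIV. dG m d v b * g a d)"
  define P4 where "P4 = (\<Sum>d\<in>UNIV. dG v d m b * g a d)"
  define Q1 where "Q1 = (\<Sum>d\<in>UNIV. G d v a * dg m d b)"
  define Q2 where "Q2 = (\<Sum>d\<in>UNIV. G d m a * dg v d b)"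
  define Q3 where "Q3 = (\<Sum>d\<in>UNIV. G d v b * dg m a d)"
  define Q4 where "Q4 = (\<Sum>d\<in>UNIV. G d m b * dg v a d)"
  have star: "P1 + Q1 + P3 + Q3 - P2 - Q2 - P4 - Q4 = 0"
    using H[of m v a b] H[of v m a b] ddgs[of m v a b]
    unfolding P1_def P2_def P3_def P4_def Q1_def Q2_def Q3_def Q4_def
    by (simp add: sum.distrib)
  define Q1a where "Q1a = (\<Sum>d\<in>UNIV. \<Sum>l\<in>UNIV. G d v a * G l m d * g l b)"
  define Q1b where "Q1b = (\<Sum>d\<in>UNIV. \<Sum>l\<in>UNIV. G d v a * G l m b * g d l)"
  define Q2a where "Q2a = (\<Sum>d\<in>UNIV. \<Sum>l\<in>UNIV. G d m a * G l v d * g l b)"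
  define Q2b where "Q2b = (\<Sum>d\<in>UNIV. \<Sum>l\<in>UNIV. G d m a * G l v b * g d l)"
  define Q3a where "Q3a = (\<Sum>d\<in>UNIV. \<Sum>l\<in>UNIV. G d v b * G l m a * g l d)"
  define Q3b where "Q3b = (\<Sum>d\<in>UNIV. \<Sum>l\<in>UNIV. G d v b * G l m d * g a l)"
  define Q4a where "Q4a = (\<Sum>d\<in>UNIV. \<Sum>l\<in>UNIV. G d m b * G l v a * g l d)"
  define Q4b where "Q4b = (\<Sum>d\<in>UNIV. \<Sum>l\<in>UNIV. G d m b * G l v d * g a l)"
  have q1: "Q1 = Q1a + Q1b" unfolding Q1_def Q1a_def Q1b_def
    by (simp add: mc distrib_left sum.distrib sum_distrib_left mult_ac)
  have q2: "Q2 = Q2a + Q2b" unfolding Q2_def Q2a_def Q2b_def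
    by (simp add: mc distrib_left sum.distrib sum_distrib_left mult_ac)
  have q3: "Q3 = Q3a + Q3b" unfolding Q3_def Q3a_def Q3b_def
    by (simp add: mc distrib_left sum.distrib sum_distrib_left mult_ac)
  have q4: "Q4 = Q4a + Q4b" unfolding Q4_def Q4a_def Q4b_def
    by (simp add: mc distrib_left sum.distrib sum_distrib_left mult_ac)
  define W1 where "W1 = (\<Sum>d\<in>UNIV. \<Sum>l\<in>UNIV. g b d * G d m l * G l v a)"
  define W2 where "W2 = (\<Sum>d\<in>UNIV. \<Sum>l\<in>UNIV. g b d * G d v l * G l m a)"
  define W3 where "W3 = (\<Sum>d\<in>UNIV. \<Sum>l\<in>UNIV. g a d * G d m l * G l v b)"
  define W4 where "W4 = (\<Sum>d\<in>UNIV. \<Sum>l\<in>UNIV. g a d * G d v l * G l m b)"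
  have t1: "(\<Sum>d\<in>UNIV. g b d * R d a m v) = P1 - P2 + W1 - W2"
    unfolding P1_def P2_def W1_def W2_def
    by (simp add: R_def algebra_simps sum.distrib sum_subtractf sum_distrib_left gs)
  have t2: "(\<Sum>d\<in>UNIV. g a d * R d b m v) = P3 - P4 + W3 - W4"
    unfolding P3_def P4_def W3_def W4_def
    by (simp add: R_def algebra_simps sum.distrib sum_subtractf sum_distrib_left gs)
  have e1: "Q1a = W1" unfolding Q1a_def W1_def by (subst sum.swap) (simp add: gs mult_ac)
  have e2: "Q2a = W2" unfolding Q2a_def W2_def by (subst sum.swap) (simp add: gs mult_ac)
  have e3: "Q3b = W3" unfolding Q3b_def W3_def by (subst sum.swap) (simp add: gs mult_ac)
  have e4: "Q4b = W4" unfolding Q4b_def W4_def by (subst sum.swap) (simp add: gs mult_ac)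
  have e5: "Q1b = Q4a" unfolding Q1b_def Q4a_def by (subst sum.swap) (simp add: gs mult_ac)
  have e6: "Q2b = Q3a" unfolding Q2b_def Q3a_def by (subst sum.swap) (simp add: gs mult_ac)
  show ?thesis using star q1 q2 q3 q4 t1 t2 e1 e2 e3 e4 e5 e6 by linarith
qed


lemma lower_raise:
  fixes g gi :: "'i::finite \<Rightarrow> 'i \<Rightarrow> real"
  assumes gi_g: "\<And>a c. (\<Sum>b\<in>UNIV. gi a b * g b c) = (if a = c then 1 else 0)"
  shows "(\<Sum>p\<in>UNIV. gi l p * (\<Sum>d\<in>UNIV. g p d * F d)) = F l"
proof -
  have "(\<Sum>p\<in>UNIV. gi l p * (\<Sum>d\<in>UNIV. g p d * F d)) = (\<Sum>d\<in>UNIV. (\<Sum>p\<in>UNIV. gi l p * g p d) * F d)"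
    by (simp add: sum_distrib_left sum_distrib_right mult_ac) (rule sum.swap)
  also have "\<dots> = F l" by (simp add: gi_g)
  finally show ?thesis .
qed

lemma Q0_alg:
  fixes g gi :: "'i::finite \<Rightarrow> 'i \<Rightarrow> real" and R :: "'i \<Rightarrow> 'i \<Rightarrow> 'i \<Rightarrow> 'i \<Rightarrow> real"
    and Ric :: "'i \<Rightarrow> 'i \<Rightarrow> real"
  assumes gi_g: "\<And>a c. (\<Sum>b\<in>UNIV. gi a b * g b c) = (if a = c then 1 else 0)"
    and AS: "\<And>a b m v. (\<Sum>d\<in>UNIV. g b d * R d a m v) + (\<Sum>d\<in>UNIV. g a d * R d b m v) = 0"
    and Rant: "\<And>r s m v. R r s m v = - R r s v m"
    and Ric_def: "\<And>s v. Ric s v = (\<Sum>r\<in>UNIV. R r s r v)"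
  shows "(\<Sum>e\<in>UNIV. \<Sum>s\<in>UNIV. gi e s * R l s v e) = (\<Sum>p\<in>UNIV. gi l p * Ric p v)"
proof -
  define A where "A p s v e = (\<Sum>d\<in>UNIV. g p d * R d s v e)" for p s v e
  have s1: "R l s v e = (\<Sum>p\<in>UNIV. gi l p * A p s v e)" for l s v e
    unfolding A_def by (rule lower_raise[OF gi_g, symmetric])
  have s2: "(\<Sum>s\<in>UNIV. gi e s * A s p v e) = R e p v e" for e p v
    unfolding A_def by (rule lower_raise[OF gi_g])
  have Aant: "A p s v e = - A s p v e" for p s v e
    using AS[of s p v e] unfolding A_def by linarith
  have "(\<Sum>e\<in>UNIV. \<Sum>s\<in>UNIV. gi e s * R l s v e) = (\<Sum>e\<in>UNIV. \<Sum>s\<in>UNIV. \<Sum>p\<in>UNIV. - (gi l p * (gi e s * A s p v e)))"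
  proof (intro sum.cong refl)
    fix e s
    have "R l s v e = (\<Sum>p\<in>UNIV. gi l p * (- A s p v e))" by (simp only: s1 Aant[of _ s v e])
    then show "gi e s * R l s v e = (\<Sum>p\<in>UNIV. - (gi l p * (gi e s * A s p v e)))"
      by (simp add: sum_distrib_left sum_negf mult_ac)
  qed
  also have "\<dots> = (\<Sum>p\<in>UNIV. \<Sum>e\<in>UNIV. \<Sum>s\<in>UNIV. - (gi l p * (gi e s * A s p v e)))"
    by (rule s3_cab)
  also have "\<dots> = (\<Sum>p\<in>UNIV. - (gi l p * (\<Sum>e\<in>UNIV. (\<Sum>s\<in>UNIV. gi e s * A s p v e))))"
    by (simp add: sum_distrib_left sum_negf)
  also have "\<dots> = (\<Sum>p\<in>UNIV. - (gi l p * (\<Sum>e\<in>UNIV. R e p v e)))" by (simp only: s2)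
  also have "\<dots> = (\<Sum>p\<in>UNIV. gi l p * Ric p v)"
  proof -
    have rr: "(\<Sum>e\<in>UNIV. R e p v e) = - Ric p v" for p
      unfolding Ric_def sum_negf[symmetric] by (rule sum.cong[OF refl]) (rule Rant)
    show ?thesis by (simp add: rr)
  qed
  finally show ?thesis .
qed

lemma trace_zero_alg:
  fixes g gi :: "'i::finite \<Rightarrow> 'i \<Rightarrow> real" and R :: "'i \<Rightarrow> 'i \<Rightarrow> 'i \<Rightarrow> 'i \<Rightarrow> real"
  assumes gi_g: "\<And>a c. (\<Sum>b\<in>UNIV. gi a b * g b c) = (if a = c then 1 else 0)"
    and gis: "\<And>a b. gi a b = gi b a"
    and AS: "\<And>a b m v. (\<Sum>d\<in>UNIV. g b d * R d a m v) + (\<Sum>d\<in>UNIV. g a d * R d b m v) = 0"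
  shows "(\<Sum>r\<in>UNIV. R r r m v) = 0"
proof -
  have 1: "(\<Sum>a\<in>UNIV. \<Sum>b\<in>UNIV. gi a b * (\<Sum>d\<in>UNIV. g b d * R d a m v)) = (\<Sum>r\<in>UNIV. R r r m v)"
    by (rule sum.cong[OF refl]) (rule lower_raise[OF gi_g])
  have 2: "(\<Sum>a\<in>UNIV. \<Sum>b\<in>UNIV. gi a b * (\<Sum>d\<in>UNIV. g a d * R d b m v)) = (\<Sum>r\<in>UNIV. R r r m v)"
  proof -
    have "(\<Sum>a\<in>UNIV. \<Sum>b\<in>UNIV. gi a b * (\<Sum>d\<in>UNIV. g a d * R d b m v))
       = (\<Sum>b\<in>UNIV. \<Sum>a\<in>UNIV. gi b a * (\<Sum>d\<in>UNIV. g a d * R d b m v))"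
      by (subst sum.swap) (simp only: gis)
    also have "\<dots> = (\<Sum>r\<in>UNIV. R r r m v)"
      by (rule sum.cong[OF refl]) (rule lower_raise[OF gi_g])
    finally show ?thesis .
  qed
  have "(\<Sum>a\<in>UNIV. \<Sum>b\<in>UNIV. gi a b * ((\<Sum>d\<in>UNIV. g b d * R d a m v) + (\<Sum>d\<in>UNIV. g a d * R d b m v))) = 0"
    using AS by simp
  then show ?thesis using 1 2 by (simp add: distrib_left sum.distrib)
qed

lemma ric_sym_alg:
  fixes G :: "'i::finite \<Rightarrow> 'i \<Rightarrow> 'i \<Rightarrow> real" and dG R :: "'i \<Rightarrow> 'i \<Rightarrow> 'i \<Rightarrow> 'i \<Rightarrow> real"
  assumes Gs: "\<And>k i j. G k i j = G k j i" and dGs: "\<And>e k i j. dG e k i j = dG e k j i"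
    and R_def: "\<And>r s m v. R r s m v = dG m r v s - dG v r m s + (\<Sum>l\<in>UNIV. G r m l * G l v s) - (\<Sum>l\<in>UNIV. G r v l * G l m s)"
    and tz: "\<And>m v. (\<Sum>r\<in>UNIV. R r r m v) = 0"
  shows "(\<Sum>r\<in>UNIV. R r s r v) = (\<Sum>r\<in>UNIV. R r v r s)"
proof -
  have pw: "R r s r v - R r v r s + R r r v s = 0" for r
  proof -
    have a: "(\<Sum>l\<in>UNIV. G r r l * G l v s) = (\<Sum>l\<in>UNIV. G r r l * G l s v)" by (simp add: Gs[of _ v s])
    have b: "(\<Sum>l\<in>UNIV. G r v l * G l r s) = (\<Sum>l\<in>UNIV. G r v l * G l s r)" by (simp add: Gs[of _ r s])
    have c: "(\<Sum>l\<in>UNIV. G r s l * G l r v) = (\<Sum>l\<in>UNIV. G r s l * G l v r)" by (simp add: Gs[of _ r v])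
    show ?thesis unfolding R_def using a b c dGs[of r r v s] dGs[of v r s r] dGs[of s r v r] by linarith
  qed
  have "(\<Sum>r\<in>UNIV. R r s r v - R r v r s + R r r v s) = 0" using pw by simp
  then show ?thesis using tz[of v s] by (simp add: sum.distrib sum_subtractf)
qed




lemma leib_alg:
  fixes G :: "'i::finite \<Rightarrow> 'i \<Rightarrow> 'i \<Rightarrow> real" and gi E :: "'i \<Rightarrow> 'i \<Rightarrow> real"
    and dgi dE :: "'i \<Rightarrow> 'i \<Rightarrow> 'i \<Rightarrow> real" and nl nu :: "'i \<Rightarrow> real" and dnl :: "'i \<Rightarrow> 'i \<Rightarrow> real"
  assumes dgi: "\<And>c a b. dgi c a b = - (\<Sum>d\<in>UNIV. G a c d * gi d b) - (\<Sum>d\<in>UNIV. G b c d * gi a d)"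
    and nu: "\<And>a. nu a = (\<Sum>b\<in>UNIV. gi a b * nl b)"
  shows "(\<Sum>e\<in>UNIV. (\<Sum>a\<in>UNIV. gi e a * (dnl c a - (\<Sum>k\<in>UNIV. G k c a * nl k))) * E e b
            + nu e * (dE c e b - (\<Sum>k\<in>UNIV. G k c e * E k b) - (\<Sum>k\<in>UNIV. G k c b * E e k)))
       = (\<Sum>e\<in>UNIV. (\<Sum>a\<in>UNIV. dgi c e a * nl a + gi e a * dnl c a) * E e b + nu e * dE c e b)
         - (\<Sum>k\<in>UNIV. G k c b * (\<Sum>e\<in>UNIV. nu e * E e k))"
proof -
  have nup: "(\<Sum>a\<in>UNIV. gi e a * (dnl c a - (\<Sum>k\<in>UNIV. G k c a * nl k)))
        = (\<Sum>a\<in>UNIV. dgi c e a * nl a + gi e a * dnl c a) + (\<Sum>d\<in>UNIV. G e c d * nu d)" for e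
  proof -
    have 1: "(\<Sum>a\<in>UNIV. gi e a * (dnl c a - (\<Sum>k\<in>UNIV. G k c a * nl k)))
        = (\<Sum>a\<in>UNIV. gi e a * dnl c a) - (\<Sum>a\<in>UNIV. \<Sum>k\<in>UNIV. gi e a * G k c a * nl k)"
      by (simp add: right_diff_distrib sum_subtractf sum_distrib_left mult_ac)
    have 2: "(\<Sum>a\<in>UNIV. dgi c e a * nl a) = - (\<Sum>a\<in>UNIV. \<Sum>d\<in>UNIV. G e c d * gi d a * nl a) - (\<Sum>a\<in>UNIV. \<Sum>d\<in>UNIV. G a c d * gi e d * nl a)"
      by (simp add: dgi algebra_simps sum_subtractf sum.distrib sum_distrib_left sum_distrib_right sum_negf)
    have 4: "(\<Sum>a\<in>UNIV. \<Sum>d\<in>UNIV. G e c d * gi d a * nl a) = (\<Sum>d\<in>UNIV. G e c d * nu d)"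
      by (subst sum.swap) (simp add: nu sum_distrib_left mult_ac)
    have 3: "(\<Sum>a\<in>UNIV. \<Sum>d\<in>UNIV. G a c d * gi e d * nl a) = (\<Sum>a\<in>UNIV. \<Sum>k\<in>UNIV. gi e a * G k c a * nl k)"
      by (subst sum.swap) (simp add: mult_ac)
    show ?thesis using 1 2 4 3 by (simp add: sum.distrib)
  qed
  have s1: "(\<Sum>e\<in>UNIV. \<Sum>d\<in>UNIV. G e c d * nu d * E e b) = (\<Sum>e\<in>UNIV. \<Sum>k\<in>UNIV. nu e * G k c e * E k b)"
    by (subst sum.swap) (simp add: mult_ac)
  have l: "(\<Sum>e\<in>UNIV. (\<Sum>a\<in>UNIV. gi e a * (dnl c a - (\<Sum>k\<in>UNIV. G k c a * nl k))) * E e b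
            + nu e * (dE c e b - (\<Sum>k\<in>UNIV. G k c e * E k b) - (\<Sum>k\<in>UNIV. G k c b * E e k)))
     = (\<Sum>e\<in>UNIV. (\<Sum>a\<in>UNIV. dgi c e a * nl a + gi e a * dnl c a) * E e b) + (\<Sum>e\<in>UNIV. \<Sum>d\<in>UNIV. G e c d * nu d * E e b)
       + (\<Sum>e\<in>UNIV. nu e * dE c e b) - (\<Sum>e\<in>UNIV. \<Sum>k\<in>UNIV. nu e * G k c e * E k b)
       - (\<Sum>e\<in>UNIV. \<Sum>k\<in>UNIV. nu e * G k c b * E e k)"
    by (simp only: nup) (simp add: algebra_simps sum.distrib sum_subtractf sum_distrib_left sum_distrib_right)
  have r: "(\<Sum>k\<in>UNIV. G k c b * (\<Sum>e\<in>UNIV. nu e * E e k)) = (\<Sum>e\<in>UNIV. \<Sum>k\<in>UNIV. nu e * G k c b * E e k)"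
    by (subst sum.swap) (simp add: sum_distrib_left mult_ac)
  show ?thesis using l s1 r by (simp add: sum.distrib)
qed


lemma claim1_alg:
  fixes gi E :: "'i::finite \<Rightarrow> 'i \<Rightarrow> real" and nl nu :: "'i \<Rightarrow> real" and cn :: "'i \<Rightarrow> 'i \<Rightarrow> real"
    and cE :: "'i \<Rightarrow> 'i \<Rightarrow> 'i \<Rightarrow> real" and eps :: real
  assumes gis: "\<And>a b. gi a b = gi b a" and nu: "\<And>a. nu a = (\<Sum>b\<in>UNIV. gi a b * nl b)"
    and Es: "\<And>a b. E a b = E b a" and NE: "\<And>b. (\<Sum>e\<in>UNIV. nu e * E e b) = 0"
    and leib: "\<And>c b. (\<Sum>e\<in>UNIV. (\<Sum>a\<in>UNIV. gi e a * cn c a) * E e b + nu e * cE c e b) = 0"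
    and divE: "\<And>b. (\<Sum>a\<in>UNIV. \<Sum>c\<in>UNIV. gi a c * cE c a b) = 0"
    and cEs: "\<And>c e b. cE c e b = cE c b e"
  shows "(\<Sum>a\<in>UNIV. \<Sum>b\<in>UNIV. (\<Sum>c\<in>UNIV. \<Sum>d\<in>UNIV. gi a c * gi b d *
           (\<Sum>e\<in>UNIV. ((if e = c then 1 else 0) - eps * nu e * nl c) * cn e d)) * E a b) = 0"
proof -
  define Nup where "Nup c e = (\<Sum>a\<in>UNIV. gi e a * cn c a)" for c e
  have i: "(\<Sum>c\<in>UNIV. \<Sum>d\<in>UNIV. gi a c * gi b d * (\<Sum>e\<in>UNIV. ((if e = c then 1 else 0) - eps * nu e * nl c) * cn e d))
      = (\<Sum>e\<in>UNIV. (gi a e - eps * nu e * nu a) * Nup e b)" for a b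
  proof -
    have "(\<Sum>c\<in>UNIV. \<Sum>d\<in>UNIV. gi a c * gi b d * (\<Sum>e\<in>UNIV. ((if e = c then 1 else 0) - eps * nu e * nl c) * cn e d))
        = (\<Sum>c\<in>UNIV. \<Sum>d\<in>UNIV. \<Sum>e\<in>UNIV. gi a c * ((if e = c then 1 else 0) - eps * nu e * nl c) * (gi b d * cn e d))"
      by (simp add: sum_distrib_left mult_ac)
    also have "\<dots> = (\<Sum>c\<in>UNIV. \<Sum>e\<in>UNIV. gi a c * ((if e = c then 1 else 0) - eps * nu e * nl c) * Nup e b)"
      by (subst s3_acb) (simp add: Nup_def sum_distrib_left)
    also have "\<dots> = (\<Sum>e\<in>UNIV. (\<Sum>c\<in>UNIV. gi a c * ((if e = c then 1 else 0) - eps * nu e * nl c)) * Nup e b)"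
      by (subst sum.swap) (simp add: sum_distrib_right)
    also have "\<dots> = (\<Sum>e\<in>UNIV. (gi a e - eps * nu e * nu a) * Nup e b)"
    proof -
      have "(\<Sum>c\<in>UNIV. gi a c * ((if e = c then 1 else 0) - eps * nu e * nl c)) = gi a e - eps * nu e * (\<Sum>c\<in>UNIV. gi a c * nl c)" for e
        by (simp add: right_diff_distrib sum_subtractf sum_distrib_left mult_ac)
      then have "(\<Sum>c\<in>UNIV. gi a c * ((if e = c then 1 else 0) - eps * nu e * nl c)) = gi a e - eps * nu e * nu a" for e
        by (simp add: nu)
      then show ?thesis by simp
    qed
    finally show ?thesis .
  qed
  have ii: "(\<Sum>a\<in>UNIV. \<Sum>b\<in>UNIV. (\<Sum>e\<in>UNIV. (gi a e - eps * nu e * nu a) * Nup e b) * E a b)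
      = (\<Sum>b\<in>UNIV. \<Sum>e\<in>UNIV. \<Sum>a\<in>UNIV. Nup e b * gi a e * E a b)"
  proof -
    have "(\<Sum>a\<in>UNIV. \<Sum>b\<in>UNIV. (\<Sum>e\<in>UNIV. (gi a e - eps * nu e * nu a) * Nup e b) * E a b)
        = (\<Sum>a\<in>UNIV. \<Sum>b\<in>UNIV. \<Sum>e\<in>UNIV. Nup e b * ((gi a e - eps * nu e * nu a) * E a b))"
      by (simp add: sum_distrib_right sum_distrib_left mult_ac)
    also have "\<dots> = (\<Sum>b\<in>UNIV. \<Sum>e\<in>UNIV. Nup e b * (\<Sum>a\<in>UNIV. (gi a e - eps * nu e * nu a) * E a b))"
      by (subst s3_bca) (simp add: sum_distrib_left)
    also have "\<dots> = (\<Sum>b\<in>UNIV. \<Sum>e\<in>UNIV. Nup e b * (\<Sum>a\<in>UNIV. gi a e * E a b))"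
    proof -
      have "(\<Sum>a\<in>UNIV. (gi a e - eps * nu e * nu a) * E a b) = (\<Sum>a\<in>UNIV. gi a e * E a b) - eps * nu e * (\<Sum>a\<in>UNIV. nu a * E a b)" for e b
        by (simp add: algebra_simps sum_subtractf sum_distrib_left)
      then show ?thesis by (simp add: NE)
    qed
    also have "\<dots> = (\<Sum>b\<in>UNIV. \<Sum>e\<in>UNIV. \<Sum>a\<in>UNIV. Nup e b * gi a e * E a b)"
      by (simp add: sum_distrib_left mult_ac)
    finally show ?thesis .
  qed
  have iii: "(\<Sum>c\<in>UNIV. \<Sum>b\<in>UNIV. \<Sum>e\<in>UNIV. gi c b * Nup c e * E e b) = 0"
  proof -
    have "(\<Sum>c\<in>UNIV. \<Sum>b\<in>UNIV. gi c b * (\<Sum>e\<in>UNIV. Nup c e * E e b + nu e * cE c e b)) = 0"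
      using leib by (simp add: Nup_def)
    moreover have "(\<Sum>c\<in>UNIV. \<Sum>b\<in>UNIV. gi c b * (\<Sum>e\<in>UNIV. nu e * cE c e b)) = 0"
    proof -
      have "(\<Sum>c\<in>UNIV. \<Sum>b\<in>UNIV. gi c b * (\<Sum>e\<in>UNIV. nu e * cE c e b))
          = (\<Sum>e\<in>UNIV. nu e * (\<Sum>b\<in>UNIV. \<Sum>c\<in>UNIV. gi b c * cE c b e))"
      proof -
        have "(\<Sum>c\<in>UNIV. \<Sum>b\<in>UNIV. gi c b * (\<Sum>e\<in>UNIV. nu e * cE c e b))
            = (\<Sum>c\<in>UNIV. \<Sum>b\<in>UNIV. \<Sum>e\<in>UNIV. nu e * (gi c b * cE c e b))"
          by (simp add: sum_distrib_left mult_ac)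
        also have "\<dots> = (\<Sum>e\<in>UNIV. \<Sum>c\<in>UNIV. \<Sum>b\<in>UNIV. nu e * (gi c b * cE c e b))"
          by (rule s3_cab)
        also have "\<dots> = (\<Sum>e\<in>UNIV. nu e * (\<Sum>c\<in>UNIV. \<Sum>b\<in>UNIV. gi c b * cE c e b))"
          by (simp add: sum_distrib_left)
        also have "\<dots> = (\<Sum>e\<in>UNIV. nu e * (\<Sum>b\<in>UNIV. \<Sum>c\<in>UNIV. gi b c * cE c b e))"
          by (subst (2) sum.swap) (simp add: gis cEs)
        finally show ?thesis .
      qed
      then show ?thesis using divE by simp
    qed
    ultimately show ?thesis
      by (simp add: distrib_left sum.distrib sum_distrib_left mult_ac)
  qed
  have iv: "(\<Sum>b\<in>UNIV. \<Sum>e\<in>UNIV. \<Sum>a\<in>UNIV. Nup e b * gi a e * E a b) = (\<Sum>c\<in>UNIV. \<Sum>b\<in>UNIV. \<Sum>e\<in>UNIV. gi c b * Nup c e * E e b)"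
    by (subst s3_bca) (simp add: gis Es mult_ac)
  show ?thesis using i ii iii iv by simp
qed


lemma mult_ifz1: "a * (if P then b else 0) = (if P then a * b else (0::'a::mult_zero))" by simp
lemma mult_ifz2: "(if P then b else 0) * a = (if P then b * a else (0::'a::mult_zero))" by simp

lemma claim2_alg:
  fixes gi E :: "'i::finite \<Rightarrow> 'i \<Rightarrow> real" and nl nu :: "'i \<Rightarrow> real" and cn :: "'i \<Rightarrow> 'i \<Rightarrow> real"
    and cE :: "'i \<Rightarrow> 'i \<Rightarrow> 'i \<Rightarrow> real" and eps :: real
  assumes gis: "\<And>a b. gi a b = gi b a" and nu: "\<And>a. nu a = (\<Sum>b\<in>UNIV. gi a b * nl b)"
    and Es: "\<And>a b. E a b = E b a" and NE: "\<And>b. (\<Sum>e\<in>UNIV. nu e * E e b) = 0"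
    and leib: "\<And>c b. (\<Sum>e\<in>UNIV. (\<Sum>a\<in>UNIV. gi e a * cn c a) * E e b + nu e * cE c e b) = 0"
    and divE: "\<And>b. (\<Sum>a\<in>UNIV. \<Sum>c\<in>UNIV. gi a c * cE c a b) = 0"
    and eps2: "eps * eps = 1" and nn: "(\<Sum>a\<in>UNIV. nu a * nl a) = eps"
  defines "h \<equiv> \<lambda>e a. (if e = a then 1 else 0) - eps * nu e * nl a"
    and "hU \<equiv> \<lambda>a c. gi a c - eps * nu a * nu c"
  shows "(\<Sum>a\<in>UNIV. \<Sum>c\<in>UNIV. hU a c * (\<Sum>d\<in>UNIV. \<Sum>e\<in>UNIV. \<Sum>f\<in>UNIV. h d c * h e a * h f b * cE d e f))
     - eps * (\<Sum>a\<in>UNIV. (\<Sum>c\<in>UNIV. gi a c * (\<Sum>e\<in>UNIV. nu e * cn e c)) * E a b) = 0"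
proof -
  have gn: "(\<Sum>c\<in>UNIV. gi a c * nl c) = nu a" for a by (simp add: nu)
  have hh: "(\<Sum>c\<in>UNIV. hU a c * h d c) = hU a d" for a d
  proof -
    have "(\<Sum>c\<in>UNIV. hU a c * h d c) = (\<Sum>c\<in>UNIV. gi a c * (if d = c then 1 else 0)) - eps * nu d * (\<Sum>c\<in>UNIV. gi a c * nl c)
        - eps * nu a * (\<Sum>c\<in>UNIV. nu c * (if d = c then 1 else 0)) + eps * eps * nu a * nu d * (\<Sum>c\<in>UNIV. nu c * nl c)"
      unfolding hU_def h_def by (simp add: algebra_simps sum.distrib sum_subtractf sum_distrib_left mult_ifz1 mult_ifz2)
    also have "\<dots> = hU a d" unfolding hU_def using eps2 nn gn[of a]
      by (simp add: algebra_simps)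
    finally show ?thesis .
  qed
  have hh2: "(\<Sum>a\<in>UNIV. hU a d * h e a) = hU e d" for e d
  proof -
    have "(\<Sum>a\<in>UNIV. hU a d * h e a) = (\<Sum>a\<in>UNIV. hU d a * h e a)" unfolding hU_def by (simp add: gis mult_ac)
    also have "\<dots> = hU d e" by (rule hh)
    also have "\<dots> = hU e d" unfolding hU_def by (simp add: gis mult_ac)
    finally show ?thesis .
  qed
  define Z where "Z d e = (\<Sum>f\<in>UNIV. h f b * cE d e f)" for d e
  have s1: "(\<Sum>d\<in>UNIV. \<Sum>e\<in>UNIV. \<Sum>f\<in>UNIV. h d c * h e a * h f b * cE d e f) = (\<Sum>d\<in>UNIV. h d c * (\<Sum>e\<in>UNIV. h e a * Z d e))" for c a
    unfolding Z_def by (simp add: sum_distrib_left mult_ac)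
  have s2: "(\<Sum>c\<in>UNIV. hU a c * (\<Sum>d\<in>UNIV. h d c * (\<Sum>e\<in>UNIV. h e a * Z d e))) = (\<Sum>d\<in>UNIV. hU a d * (\<Sum>e\<in>UNIV. h e a * Z d e))" for a
  proof -
    define Y where "Y d = (\<Sum>e\<in>UNIV. h e a * Z d e)" for d
    have "(\<Sum>c\<in>UNIV. hU a c * (\<Sum>d\<in>UNIV. h d c * Y d)) = (\<Sum>c\<in>UNIV. \<Sum>d\<in>UNIV. hU a c * h d c * Y d)"
      by (simp add: sum_distrib_left mult_ac)
    also have "\<dots> = (\<Sum>d\<in>UNIV. \<Sum>c\<in>UNIV. hU a c * h d c * Y d)" by (rule sum.swap)
    also have "\<dots> = (\<Sum>d\<in>UNIV. (\<Sum>c\<in>UNIV. hU a c * h d c) * Y d)" by (simp add: sum_distrib_right)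
    finally show ?thesis unfolding Y_def by (simp add: hh)
  qed
  have s3: "(\<Sum>a\<in>UNIV. \<Sum>d\<in>UNIV. hU a d * (\<Sum>e\<in>UNIV. h e a * Z d e)) = (\<Sum>d\<in>UNIV. \<Sum>e\<in>UNIV. hU e d * Z d e)"
  proof -
    have "(\<Sum>a\<in>UNIV. \<Sum>d\<in>UNIV. hU a d * (\<Sum>e\<in>UNIV. h e a * Z d e)) = (\<Sum>a\<in>UNIV. \<Sum>d\<in>UNIV. \<Sum>e\<in>UNIV. hU a d * h e a * Z d e)"
      by (simp add: sum_distrib_left mult_ac)
    also have "\<dots> = (\<Sum>d\<in>UNIV. \<Sum>e\<in>UNIV. \<Sum>a\<in>UNIV. hU a d * h e a * Z d e)" by (rule s3_bca)
    also have "\<dots> = (\<Sum>d\<in>UNIV. \<Sum>e\<in>UNIV. (\<Sum>a\<in>UNIV. hU a d * h e a) * Z d e)" by (simp add: sum_distrib_right)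
    finally show ?thesis by (simp add: hh2)
  qed
  define W where "W f = (\<Sum>d\<in>UNIV. \<Sum>e\<in>UNIV. hU e d * cE d e f)" for f
  have s4: "(\<Sum>d\<in>UNIV. \<Sum>e\<in>UNIV. hU e d * Z d e) = (\<Sum>f\<in>UNIV. h f b * W f)"
  proof -
    have "(\<Sum>d\<in>UNIV. \<Sum>e\<in>UNIV. hU e d * Z d e) = (\<Sum>d\<in>UNIV. \<Sum>e\<in>UNIV. \<Sum>f\<in>UNIV. h f b * (hU e d * cE d e f))"
      unfolding Z_def by (simp add: sum_distrib_left mult_ac)
    also have "\<dots> = (\<Sum>f\<in>UNIV. \<Sum>d\<in>UNIV. \<Sum>e\<in>UNIV. h f b * (hU e d * cE d e f))" by (rule s3_cab)
    also have "\<dots> = (\<Sum>f\<in>UNIV. h f b * W f)" unfolding W_def by (simp add: sum_distrib_left)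
    finally show ?thesis .
  qed
  define acc where "acc e = (\<Sum>c\<in>UNIV. gi e c * (\<Sum>d\<in>UNIV. nu d * cn d c))" for e
  have W: "W f = eps * (\<Sum>e\<in>UNIV. acc e * E e f)" for f
  proof -
    have w1: "W f = (\<Sum>d\<in>UNIV. \<Sum>e\<in>UNIV. gi e d * cE d e f) - eps * (\<Sum>d\<in>UNIV. nu d * (\<Sum>e\<in>UNIV. nu e * cE d e f))"
      unfolding W_def hU_def by (simp add: algebra_simps sum_subtractf sum_distrib_left)
    have w2: "(\<Sum>d\<in>UNIV. \<Sum>e\<in>UNIV. gi e d * cE d e f) = 0"
      using divE[of f] by (subst sum.swap) simp
    have w3: "(\<Sum>e\<in>UNIV. nu e * cE d e f) = - (\<Sum>e\<in>UNIV. (\<Sum>a\<in>UNIV. gi e a * cn d a) * E e f)" for d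
      using leib[of d f] by (simp add: sum.distrib eq_neg_iff_add_eq_0 add.commute)
    have w4: "(\<Sum>d\<in>UNIV. nu d * (\<Sum>e\<in>UNIV. (\<Sum>a\<in>UNIV. gi e a * cn d a) * E e f)) = (\<Sum>e\<in>UNIV. acc e * E e f)"
    proof -
      have "(\<Sum>d\<in>UNIV. nu d * (\<Sum>e\<in>UNIV. (\<Sum>a\<in>UNIV. gi e a * cn d a) * E e f))
          = (\<Sum>d\<in>UNIV. \<Sum>e\<in>UNIV. \<Sum>a\<in>UNIV. gi e a * (nu d * cn d a) * E e f)"
        by (simp add: sum_distrib_left sum_distrib_right mult_ac)
      also have "\<dots> = (\<Sum>e\<in>UNIV. \<Sum>a\<in>UNIV. \<Sum>d\<in>UNIV. gi e a * (nu d * cn d a) * E e f)" by (rule s3_bca)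
      also have "\<dots> = (\<Sum>e\<in>UNIV. acc e * E e f)"
        unfolding acc_def by (simp add: sum_distrib_left sum_distrib_right mult_ac)
      finally show ?thesis .
    qed
    show ?thesis using w1 w2 w3 w4 by (simp add: sum_negf)
  qed
  have hb: "(\<Sum>f\<in>UNIV. h f b * E e f) = E e b" for e
  proof -
    have "(\<Sum>f\<in>UNIV. h f b * E e f) = E e b - eps * nl b * (\<Sum>f\<in>UNIV. nu f * E f e)"
      unfolding h_def by (simp add: algebra_simps sum_subtractf sum_distrib_left Es)
    then show ?thesis using NE by simp
  qed
  have s5: "(\<Sum>f\<in>UNIV. h f b * W f) = eps * (\<Sum>e\<in>UNIV. acc e * E e b)"
  proof -
    have "(\<Sum>f\<in>UNIV. h f b * W f) = eps * (\<Sum>f\<in>UNIV. \<Sum>e\<in>UNIV. acc e * (h f b * E e f))"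
      unfolding W by (simp add: sum_distrib_left mult_ac)
    also have "\<dots> = eps * (\<Sum>e\<in>UNIV. \<Sum>f\<in>UNIV. acc e * (h f b * E e f))" by (subst sum.swap) (rule refl)
    also have "\<dots> = eps * (\<Sum>e\<in>UNIV. acc e * (\<Sum>f\<in>UNIV. h f b * E e f))" by (simp add: sum_distrib_left)
    also have "\<dots> = eps * (\<Sum>e\<in>UNIV. acc e * E e b)" by (simp add: hb)
    finally show ?thesis .
  qed
  have "(\<Sum>a\<in>UNIV. \<Sum>c\<in>UNIV. hU a c * (\<Sum>d\<in>UNIV. \<Sum>e\<in>UNIV. \<Sum>f\<in>UNIV. h d c * h e a * h f b * cE d e f))
       = eps * (\<Sum>e\<in>UNIV. acc e * E e b)"
    by (simp only: s1 s2 s3 s4 s5)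
  then show ?thesis unfolding acc_def by simp
qed




lemma inv_hasder2:
  fixes h :: "real^'n::finite \<Rightarrow> real"
  assumes "h differentiable (at y)" "h y \<noteq> 0"
  shows "((\<lambda>y. inverse (h y)) has_derivative
          (\<lambda>v. - (inverse (h y) * frechet_derivative h (at y) v * inverse (h y)))) (at y)"
  using assms(2) fdw[OF assms(1)] by (auto intro!: derivative_eq_intros)

lemma smk_inv_k:
  assumes "open U"
  shows "smk U k h \<Longrightarrow> (\<And>y. y \<in> U \<Longrightarrow> h y \<noteq> 0) \<Longrightarrow> smk U k (\<lambda>y. inverse (h y))"
proof (induction k arbitrary: h)
  case 0 then show ?case using inv_hasder2 smk_diff unfolding smk_0 differentiable_def by blast
next
  case (Suc k)
  show ?case unfolding smk_Suc
  proof (intro conjI ballI allI)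
    fix x assume "x \<in> U" then show "(\<lambda>y. inverse (h y)) differentiable (at x)"
      using Suc.prems inv_hasder2 smk_diff unfolding differentiable_def by blast
  next
    fix i
    have a: "smk U k (pd i h)" "smk U k h" using Suc.prems smk_mono by (auto simp: smk_Suc)
    have "smk U k (\<lambda>y. (-1) * pd i h y)" by (intro smk_mult[OF assms] smk_const a)
    moreover have "smk U k (\<lambda>y. inverse (h y * h y))"
      using Suc.prems by (intro Suc.IH smk_mult[OF assms] a) auto
    ultimately have "smk U k (\<lambda>y. ((-1) * pd i h y) * inverse (h y * h y))" by (rule smk_mult[OF assms])
    moreover have "pd i (\<lambda>y. inverse (h y)) y = ((-1) * pd i h y) * inverse (h y * h y)" if y: "y \<in> U" for y
    proof -
      have d: "h differentiable (at y)" using Suc.prems(1) y smk_diff by blast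
      from pd_has_derivative[OF inv_hasder2[OF d Suc.prems(2)[OF y]], of i] show ?thesis
        using Suc.prems(2)[OF y] pd_fd[OF d, of i] by (simp add: field_simps)
    qed
    ultimately show "smk U k (pd i (\<lambda>y. inverse (h y)))"
      using smk_local[OF assms, of "\<lambda>y. ((-1) * pd i h y) * inverse (h y * h y)" "pd i (\<lambda>y. inverse (h y))" k]
      by metis
  qed
qed

lemma sqrt_hasder:
  assumes "h differentiable (at y)" "h y > 0"
  shows "((\<lambda>y. sqrt (h y)) has_derivative (\<lambda>v. frechet_derivative h (at y) v * (inverse (sqrt (h y)) / 2))) (at y)"
  using has_derivative_real_sqrt[OF assms(2) fdw[OF assms(1)]] .

lemma smk_sqrt:
  assumes "open U"
  shows "smooth_on U h \<Longrightarrow> (\<And>y. y \<in> U \<Longrightarrow> h y > 0) \<Longrightarrow> smk U k (\<lambda>y. sqrt (h y))"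
proof (induction k arbitrary: h)
  case 0 then show ?case using sqrt_hasder smooth_diffble unfolding smk_0 differentiable_def by blast
next
  case (Suc k)
  show ?case unfolding smk_Suc
  proof (intro conjI ballI allI)
    fix x assume "x \<in> U" then show "(\<lambda>y. sqrt (h y)) differentiable (at x)"
      using Suc.prems sqrt_hasder smooth_diffble unfolding differentiable_def by blast
  next
    fix i
    have a: "smk U k (pd i h)" using Suc.prems smooth_pd smooth_smk by blast
    have b: "smk U k (\<lambda>y. sqrt (h y))" using Suc by blast
    have nz: "y \<in> U \<Longrightarrow> sqrt (h y) \<noteq> 0" for y using Suc.prems(2)[of y] by force
    have "smk U k (\<lambda>y. inverse (sqrt (h y)))"
      by (rule smk_inv_k[OF assms b nz])
    then have "smk U k (\<lambda>y. pd i h y * (inverse (sqrt (h y)) * (1/2)))"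
      by (intro smk_mult[OF assms] a smk_const)
    moreover have "pd i (\<lambda>y. sqrt (h y)) y = pd i h y * (inverse (sqrt (h y)) * (1/2))" if y: "y \<in> U" for y
    proof -
      have d: "h differentiable (at y)" using Suc.prems(1) y smooth_diffble by blast
      from pd_has_derivative[OF sqrt_hasder[OF d Suc.prems(2)[OF y]], of i] show ?thesis
        using pd_fd[OF d, of i] by simp
    qed
    ultimately show "smk U k (pd i (\<lambda>y. sqrt (h y)))"
      using smk_local[OF assms, of "\<lambda>y. pd i h y * (inverse (sqrt (h y)) * (1/2))" "pd i (\<lambda>y. sqrt (h y))" k]
      by metis
  qed
qed

lemma smooth_sqrt: "open U \<Longrightarrow> smooth_on U h \<Longrightarrow> (\<And>y. y \<in> U \<Longrightarrow> h y > 0) \<Longrightarrow> smooth_on U (\<lambda>y. sqrt (h y))"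
  by (simp add: smooth_smk smk_sqrt)

context geo
begin

lemma smA[simp]: "smooth_on U f \<Longrightarrow> smooth_on U h \<Longrightarrow> smooth_on U (\<lambda>y. f y + h y)"
  by (rule smooth_add[OF U_open])
lemma smD[simp]: "smooth_on U f \<Longrightarrow> smooth_on U h \<Longrightarrow> smooth_on U (\<lambda>y. f y - h y)"
  by (rule smooth_diff[OF U_open])
lemma smM[simp]: "smooth_on U f \<Longrightarrow> smooth_on U h \<Longrightarrow> smooth_on U (\<lambda>y. f y * h y)"
  by (rule smooth_mult[OF U_open])
lemma smS[simp]: "(\<And>a. smooth_on U (f a)) \<Longrightarrow> smooth_on U (\<lambda>y. \<Sum>a\<in>UNIV. (f :: 'd \<Rightarrow> real^'d \<Rightarrow> real) a y)"
  by (rule smooth_sum[OF U_open]) auto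
lemma smDiv[simp]: "smooth_on U f \<Longrightarrow> smooth_on U (\<lambda>y. f y / c)"
proof -
  assume "smooth_on U f"
  then have "smooth_on U (\<lambda>y. (1/c) * f y)" by (rule smooth_cmult[OF U_open])
  then show ?thesis by simp
qed
lemma smC[simp]: "smooth_on U (\<lambda>y. c)" by (rule smooth_const)
lemma smP[simp]: "smooth_on U f \<Longrightarrow> smooth_on U (pd i f)" by (rule smooth_pd)
lemma smg[simp]: "smooth_on U (\<lambda>y. g y a b)" by (rule g_smooth)
lemma smgi[simp]: "smooth_on U (\<lambda>y. ginv g y a b)" by (rule ginv_smooth)
lemma smG[simp]: "smooth_on U (\<lambda>y. christoffel g y k i j)"
  unfolding christoffel_def by simp
lemma smR[simp]: "smooth_on U (\<lambda>y. riemann g y r s m v)"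
  unfolding riemann_def by simp
lemma smRic[simp]: "smooth_on U (\<lambda>y. ricci g y s v)"
  unfolding ricci_def by simp
lemma smScal[simp]: "smooth_on U (\<lambda>y. scalar_curv g y)"
  unfolding scalar_curv_def by simp
lemma smEin[simp]: "smooth_on U (\<lambda>y. einstein g y a b)"
  unfolding einstein_def by simp

lemma dfb: "smooth_on U f \<Longrightarrow> x \<in> U \<Longrightarrow> f differentiable (at x)"
  by (rule smooth_diffble)

lemma pdA: "x \<in> U \<Longrightarrow> smooth_on U f \<Longrightarrow> smooth_on U h \<Longrightarrow> pd i (\<lambda>y. f y + h y) x = pd i f x + pd i h x"
  by (rule pd_add) (auto intro: dfb)
lemma pdD: "x \<in> U \<Longrightarrow> smooth_on U f \<Longrightarrow> smooth_on U h \<Longrightarrow> pd i (\<lambda>y. f y - h y) x = pd i f x - pd i h x"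
  by (rule pd_diff) (auto intro: dfb)
lemma pdM: "x \<in> U \<Longrightarrow> smooth_on U f \<Longrightarrow> smooth_on U h \<Longrightarrow> pd i (\<lambda>y. f y * h y) x = pd i f x * h x + f x * pd i h x"
  by (rule pd_mult) (auto intro: dfb)
lemma pdS: "x \<in> U \<Longrightarrow> (\<And>a. smooth_on U (f a)) \<Longrightarrow> pd i (\<lambda>y. \<Sum>a\<in>UNIV. (f :: 'd \<Rightarrow> real^'d \<Rightarrow> real) a y) x = (\<Sum>a\<in>UNIV. pd i (f a) x)"
  by (rule pd_sum) (auto intro: dfb)

lemmas pd_rules = pdA pdD pdM pdS

lemma dRiem:
  assumes x: "x \<in> U"
  shows "pd e (\<lambda>y. riemann g y r s m v) x =
    pd e (pd m (\<lambda>y. christoffel g y r v s)) x - pd e (pd v (\<lambda>y. christoffel g y r m s)) x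
    + (\<Sum>l\<in>UNIV. pd e (\<lambda>y. christoffel g y r m l) x * christoffel g x l v s + christoffel g x r m l * pd e (\<lambda>y. christoffel g y l v s) x)
    - (\<Sum>l\<in>UNIV. pd e (\<lambda>y. christoffel g y r v l) x * christoffel g x l m s + christoffel g x r v l * pd e (\<lambda>y. christoffel g y l m s) x)"
  unfolding riemann_def using x by (simp add: pd_rules)

lemma pdDiv: "x \<in> U \<Longrightarrow> smooth_on U f \<Longrightarrow> pd i (\<lambda>y. f y / c) x = pd i f x / c"
proof -
  assume x: "x \<in> U" and f: "smooth_on U f"
  have "pd i (\<lambda>y. f y / c) x = pd i (\<lambda>y. (1/c) * f y) x" by simp
  also have "\<dots> = (1/c) * pd i f x" by (rule pd_cmult[OF dfb[OF f x]])
  finally show ?thesis by simp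
qed

lemma pdC: "pd i (\<lambda>y. c) x = 0" by simp

lemmas pd_rules2 = pdA pdD pdM pdS pdDiv

lemma dgsym: "y \<in> U \<Longrightarrow> pd c (\<lambda>z. g z a b) y = pd c (\<lambda>z. g z b a) y"
  by (rule pd_local[OF U_open]) (auto simp: g_sym)

lemma Gsym: "y \<in> U \<Longrightarrow> christoffel g y k i j = christoffel g y k j i"
  unfolding christoffel_def using dgsym[of y l i j for l] by (simp add: add.commute)

lemma mc: "y \<in> U \<Longrightarrow> pd c (\<lambda>z. g z a b) y = (\<Sum>d\<in>UNIV. christoffel g y d c a * g y d b) + (\<Sum>d\<in>UNIV. christoffel g y d c b * g y a d)"
  by (rule mc_alg[where gi="ginv g y"]) (auto simp: g_sym g_ginv dgsym christoffel_def)

lemma dd_ginv: "y \<in> U \<Longrightarrow> (\<Sum>q\<in>UNIV. pd c (\<lambda>z. g z p q) y * ginv g y q b + g y p q * pd c (\<lambda>z. ginv g z q b) y) = 0"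
proof -
  assume y: "y \<in> U"
  have "pd c (\<lambda>z. \<Sum>q\<in>UNIV. g z p q * ginv g z q b) y = pd c (\<lambda>z. if p = b then 1 else 0) y"
    by (rule pd_local[OF U_open y]) (simp add: g_ginv)
  then show ?thesis using y by (simp add: pd_rules2)
qed

lemma dgi: "y \<in> U \<Longrightarrow> pd c (\<lambda>z. ginv g z a b) y = - (\<Sum>d\<in>UNIV. christoffel g y a c d * ginv g y d b) - (\<Sum>d\<in>UNIV. christoffel g y b c d * ginv g y a d)"
  by (rule dgi_alg[where g="g y" and dg="\<lambda>c a b. pd c (\<lambda>z. g z a b) y"])
     (assumption | rule g_sym ginv_sym g_ginv ginv_g mc dd_ginv)+

lemma dGsym: "y \<in> U \<Longrightarrow> pd e (\<lambda>z. christoffel g z k i j) y = pd e (\<lambda>z. christoffel g z k j i) y"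
  by (rule pd_local[OF U_open]) (auto simp: Gsym)

lemma ddGsym: "y \<in> U \<Longrightarrow> pd f (pd e (\<lambda>z. christoffel g z k i j)) y = pd e (pd f (\<lambda>z. christoffel g z k i j)) y"
  by (rule schwarz[OF U_open smG])

lemma ddgsym: "y \<in> U \<Longrightarrow> pd m (pd c (\<lambda>z. g z a b)) y = pd c (pd m (\<lambda>z. g z a b)) y"
  by (rule schwarz[OF U_open smg])


lemma Hm: "y \<in> U \<Longrightarrow> pd m (pd c (\<lambda>z. g z a b)) y =
   (\<Sum>d\<in>UNIV. pd m (\<lambda>z. christoffel g z d c a) y * g y d b + christoffel g y d c a * pd m (\<lambda>z. g z d b) y)
 + (\<Sum>d\<in>UNIV. pd m (\<lambda>z. christoffel g z d c b) y * g y a d + christoffel g y d c b * pd m (\<lambda>z. g z a d) y)"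
proof -
  assume y: "y \<in> U"
  have "pd m (pd c (\<lambda>z. g z a b)) y = pd m (\<lambda>z. (\<Sum>d\<in>UNIV. christoffel g z d c a * g z d b) + (\<Sum>d\<in>UNIV. christoffel g z d c b * g z a d)) y"
    by (rule pd_local[OF U_open y]) (simp add: mc)
  also have "\<dots> = (\<Sum>d\<in>UNIV. pd m (\<lambda>z. christoffel g z d c a) y * g y d b + christoffel g y d c a * pd m (\<lambda>z. g z d b) y)
 + (\<Sum>d\<in>UNIV. pd m (\<lambda>z. christoffel g z d c b) y * g y a d + christoffel g y d c b * pd m (\<lambda>z. g z a d) y)"
    using y by (simp add: pd_rules2)
  finally show ?thesis .
qed

lemma Rant: "riemann g y r s m v = - riemann g y r s v m"
  by (simp add: riemann_def)

lemma AS: "y \<in> U \<Longrightarrow> (\<Sum>d\<in>UNIV. g y b d * riemann g y d a m v) + (\<Sum>d\<in>UNIV. g y a d * riemann g y d b m v) = 0"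
  by (rule antisym_alg[where dg="\<lambda>c a b. pd c (\<lambda>z. g z a b) y" and G="christoffel g y"
        and dG="\<lambda>e k i j. pd e (\<lambda>z. christoffel g z k i j) y" and ddg="\<lambda>m c a b. pd m (pd c (\<lambda>z. g z a b)) y"])
     (assumption | rule g_sym mc ddgsym Hm riemann_def)+

lemma Q0: "y \<in> U \<Longrightarrow> (\<Sum>e\<in>UNIV. \<Sum>s\<in>UNIV. ginv g y e s * riemann g y l s v e) = (\<Sum>p\<in>UNIV. ginv g y l p * ricci g y p v)"
  by (rule Q0_alg[where g="g y"]) (assumption | rule ginv_g AS Rant ricci_def)+

lemma tz: "y \<in> U \<Longrightarrow> (\<Sum>r\<in>UNIV. riemann g y r r m v) = 0"
  by (rule trace_zero_alg[where g="g y" and gi="ginv g y"]) (assumption | rule ginv_g ginv_sym AS)+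

lemma ric_sym: "y \<in> U \<Longrightarrow> ricci g y s v = ricci g y v s"
  unfolding ricci_def
  by (rule ric_sym_alg[where G="christoffel g y" and dG="\<lambda>e k i j. pd e (\<lambda>z. christoffel g z k i j) y"])
     (assumption | rule Gsym dGsym riemann_def tz)+

lemma ein_sym: "y \<in> U \<Longrightarrow> einstein g y a b = einstein g y b a"
  by (simp add: einstein_def ric_sym g_sym)


lemma dQ: "x \<in> U \<Longrightarrow> (\<Sum>e\<in>UNIV. \<Sum>s\<in>UNIV. pd r (\<lambda>y. ginv g y e s) x * riemann g x r s v e + ginv g x e s * pd r (\<lambda>y. riemann g y r s v e) x)
     = (\<Sum>p\<in>UNIV. pd r (\<lambda>y. ginv g y r p) x * ricci g x p v + ginv g x r p * pd r (\<lambda>y. ricci g y p v) x)"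
proof -
  assume x: "x \<in> U"
  have "pd r (\<lambda>y. \<Sum>e\<in>UNIV. \<Sum>s\<in>UNIV. ginv g y e s * riemann g y r s v e) x = pd r (\<lambda>y. \<Sum>p\<in>UNIV. ginv g y r p * ricci g y p v) x"
    by (rule pd_local[OF U_open x]) (simp add: Q0)
  then show ?thesis using x by (simp add: pd_rules2)
qed

lemma div_einstein: "x \<in> U \<Longrightarrow> divg g (einstein g) x b = 0"
proof -
  assume x: "x \<in> U"
  show ?thesis unfolding divg_def cov2_def
    apply (rule contracted_bianchi_alg[where
        G="christoffel g x" and dG="\<lambda>e k i j. pd e (\<lambda>y. christoffel g y k i j) x"
        and ddG="\<lambda>f e k i j. pd f (pd e (\<lambda>y. christoffel g y k i j)) x"
        and R="riemann g x" and dR="\<lambda>e r s m v. pd e (\<lambda>y. riemann g y r s m v) x"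
        and g="g x" and dg="\<lambda>c a b. pd c (\<lambda>y. g y a b) x"
        and dgi="\<lambda>c a b. pd c (\<lambda>y. ginv g y a b) x"
        and Ric="ricci g x" and dRic="\<lambda>e s v. pd e (\<lambda>y. ricci g y s v) x"
        and Scal="scalar_curv g x" and dScal="\<lambda>c. pd c (\<lambda>y. scalar_curv g y) x"])
    apply (rule ddGsym[OF x])
    apply (rule Gsym[OF x])
    apply (rule riemann_def)
    apply (rule dRiem[OF x])
    apply (rule refl)
    apply (rule ginv_sym[OF x])
    apply (rule ginv_g[OF x])
    apply (rule mc[OF x])
    apply (rule dgi[OF x])
    apply (rule ricci_def)
    apply (simp add: ricci_def pd_rules2 x)
    apply (rule scalar_curv_def)
    apply (simp add: scalar_curv_def pd_rules2 x)
    apply (simp add: einstein_def)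
    apply (simp add: einstein_def pd_rules2 x field_simps)
    apply (rule Q0[OF x])
    apply (rule dQ[OF x])
    done
qed


lemma main_geo:
  fixes \<sigma> :: "real^'d \<Rightarrow> real" and cG :: "real^'d \<Rightarrow> 'd \<Rightarrow> 'd \<Rightarrow> real" and \<epsilon> \<kappa> :: real
  assumes \<sigma>_smooth: "smooth_on U \<sigma>"
    and \<epsilon>_val: "\<epsilon> = 1 \<or> \<epsilon> = -1"
    and \<epsilon>_norm: "\<And>x. x \<in> U \<Longrightarrow> \<epsilon> * gradsq g \<sigma> x > 0"
    and cG_smooth: "\<And>a b. smooth_on U (\<lambda>x. cG x a b)"
    and cG_sym: "\<And>x a b. x \<in> U \<Longrightarrow> cG x a b = cG x b a"
    and cG_div: "\<And>x b. x \<in> U \<Longrightarrow> divg g cG x b = 0"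
    and EH0: "\<And>x. x \<in> U \<Longrightarrow> E_H g cG \<sigma> x = 0"
    and EM0: "\<And>x b. x \<in> U \<Longrightarrow> E_M g cG \<sigma> \<epsilon> x b = 0"
    and x: "x \<in> U"
  shows "(\<Sum>a\<in>UNIV. \<Sum>b\<in>UNIV. extr_up g \<sigma> \<epsilon> x a b * E_EVOL g cG \<sigma> \<epsilon> \<kappa> x a b) = 0 \<and>
     (\<forall>b. Ddiv g \<sigma> \<epsilon> (E_EVOL g cG \<sigma> \<epsilon> \<kappa>) x b
          - \<epsilon> * (\<Sum>a\<in>UNIV. accel_up g \<sigma> x a * E_EVOL g cG \<sigma> \<epsilon> \<kappa> x a b) = 0)"
proof -
  have eps2: "\<epsilon> * \<epsilon> = 1" using \<epsilon>_val by auto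
  have gsabs: "\<bar>gradsq g \<sigma> y\<bar> = \<epsilon> * gradsq g \<sigma> y" if "y \<in> U" for y
    using \<epsilon>_val \<epsilon>_norm[OF that] by auto
  have smgs[simp]: "smooth_on U (gradsq g \<sigma>)"
  proof -
    have "smooth_on U (\<lambda>y. gradsq g \<sigma> y)" unfolding gradsq_def using \<sigma>_smooth by simp
    then show ?thesis by simp
  qed
  have smsq: "smooth_on U (\<lambda>y. sqrt (\<epsilon> * gradsq g \<sigma> y))"
    by (rule smooth_sqrt[OF U_open]) (auto intro: \<epsilon>_norm)
  have smnl[simp]: "smooth_on U (\<lambda>y. nlow g \<sigma> y a)" for a
  proof (rule smooth_local[OF U_open])
    have nz: "sqrt (\<epsilon> * gradsq g \<sigma> y) \<noteq> 0" if "y \<in> U" for y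
    proof -
      have "\<epsilon> * gradsq g \<sigma> y > 0" using that by (rule \<epsilon>_norm)
      then show ?thesis by (metis less_irrefl real_sqrt_eq_zero_cancel_iff)
    qed
    show "smooth_on U (\<lambda>y. pd a \<sigma> y / sqrt (\<epsilon> * gradsq g \<sigma> y))"
      by (rule smooth_divide[OF U_open smooth_pd[OF \<sigma>_smooth] smsq nz])
    show "\<And>y. y \<in> U \<Longrightarrow> pd a \<sigma> y / sqrt (\<epsilon> * gradsq g \<sigma> y) = nlow g \<sigma> y a"
      by (simp add: nlow_def gsabs)
  qed
  have smnu[simp]: "smooth_on U (\<lambda>y. nup g \<sigma> y a)" for a unfolding nup_def by simp
  have smcG[simp]: "smooth_on U (\<lambda>y. cG y a b)" for a b by (rule cG_smooth)
  have smE[simp]: "smooth_on U (\<lambda>y. Eten g cG y a b)" for a b unfolding Eten_def by simp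
  have nn: "(\<Sum>a\<in>UNIV. nup g \<sigma> y a * nlow g \<sigma> y a) = \<epsilon>" if y: "y \<in> U" for y
  proof -
    define s where "s = sqrt \<bar>gradsq g \<sigma> y\<bar>"
    have nl: "nlow g \<sigma> y a = pd a \<sigma> y / s" for a by (simp add: nlow_def s_def)
    have "(\<Sum>a\<in>UNIV. nup g \<sigma> y a * nlow g \<sigma> y a) = (\<Sum>a\<in>UNIV. \<Sum>b\<in>UNIV. ginv g y a b * pd a \<sigma> y * pd b \<sigma> y) / (s * s)"
    proof -
      have "(\<Sum>b\<in>UNIV. ginv g y a b * (pd b \<sigma> y / s)) * (pd a \<sigma> y / s) = (\<Sum>b\<in>UNIV. ginv g y a b * pd a \<sigma> y * pd b \<sigma> y / (s * s))" for a
        by (simp add: sum_distrib_right sum_distrib_left sum_divide_distrib[symmetric] mult_ac)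
      then show ?thesis unfolding nup_def nl by (simp add: sum_divide_distrib)
    qed
    also have "\<dots> = gradsq g \<sigma> y / (s * s)" by (simp add: gradsq_def)
    also have "s * s = \<epsilon> * gradsq g \<sigma> y" unfolding s_def using gsabs[OF y] by simp
    also have "gradsq g \<sigma> y / (\<epsilon> * gradsq g \<sigma> y) = \<epsilon>"
      using \<epsilon>_val \<epsilon>_norm[OF y] by auto
    finally show ?thesis .
  qed
  have Es: "Eten g cG y a b = Eten g cG y b a" if "y \<in> U" for y a b
    using that by (simp add: Eten_def ein_sym cG_sym)
  have NE: "(\<Sum>e\<in>UNIV. nup g \<sigma> y e * Eten g cG y e b) = 0" if y: "y \<in> U" for y b
  proof -
    have "E_M g cG \<sigma> \<epsilon> y b = (\<Sum>e\<in>UNIV. \<Sum>f\<in>UNIV. nup g \<sigma> y e * (if f = b then 1 else 0) * Eten g cG y e f)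
        - \<epsilon> * nlow g \<sigma> y b * E_H g cG \<sigma> y"
      unfolding E_M_def E_H_def hmix_def
      by (simp add: algebra_simps sum_subtractf sum_distrib_left)
    also have "\<dots> = (\<Sum>e\<in>UNIV. nup g \<sigma> y e * Eten g cG y e b)"
      using EH0[OF y] by (simp add: mult_ifz1 mult_ifz2)
    finally show ?thesis using EM0[OF y] by simp
  qed
  have EV: "E_EVOL g cG \<sigma> \<epsilon> \<kappa> y a b = Eten g cG y a b" if y: "y \<in> U" for y a b
  proof -
    have inner: "(\<Sum>f\<in>UNIV. hmix g \<sigma> \<epsilon> y f b * Eten g cG y e f) = Eten g cG y e b" for e b
    proof -
      have "(\<Sum>f\<in>UNIV. hmix g \<sigma> \<epsilon> y f b * Eten g cG y e f) = Eten g cG y e b - \<epsilon> * nlow g \<sigma> y b * (\<Sum>f\<in>UNIV. nup g \<sigma> y f * Eten g cG y f e)"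
        unfolding hmix_def using Es[OF y]
        by (simp add: algebra_simps sum_subtractf sum_distrib_left mult_ifz1 mult_ifz2)
      then show ?thesis using NE[OF y] by simp
    qed
    have "(\<Sum>e\<in>UNIV. \<Sum>f\<in>UNIV. hmix g \<sigma> \<epsilon> y e a * hmix g \<sigma> \<epsilon> y f b * Eten g cG y e f)
        = (\<Sum>e\<in>UNIV. hmix g \<sigma> \<epsilon> y e a * (\<Sum>f\<in>UNIV. hmix g \<sigma> \<epsilon> y f b * Eten g cG y e f))"
      by (simp add: sum_distrib_left mult_ac)
    also have "\<dots> = (\<Sum>e\<in>UNIV. hmix g \<sigma> \<epsilon> y e a * Eten g cG y e b)" by (simp add: inner)
    also have "\<dots> = Eten g cG y a b - \<epsilon> * nlow g \<sigma> y a * (\<Sum>e\<in>UNIV. nup g \<sigma> y e * Eten g cG y e b)"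
      unfolding hmix_def by (simp add: algebra_simps sum_subtractf sum_distrib_left mult_ifz1 mult_ifz2)
    also have "\<dots> = Eten g cG y a b" using NE[OF y] by simp
    finally show ?thesis unfolding E_EVOL_def using EH0[OF y] by simp
  qed
  have divE: "divg g (Eten g cG) x b = 0" for b
  proof -
    have "divg g (Eten g cG) x b = divg g (einstein g) x b - divg g cG x b"
      unfolding divg_def cov2_def Eten_def using x
      by (simp add: pdD algebra_simps sum_subtractf sum.distrib)
    then show ?thesis using div_einstein[OF x] cG_div[OF x] by simp
  qed
  have leib: "(\<Sum>e\<in>UNIV. (\<Sum>a\<in>UNIV. ginv g x e a * cov1 g (nlow g \<sigma>) x c a) * Eten g cG x e b
      + nup g \<sigma> x e * cov2 g (Eten g cG) x c e b) = 0" for c b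
  proof -
    have pN: "pd c (\<lambda>y. \<Sum>e\<in>UNIV. nup g \<sigma> y e * Eten g cG y e b) x = pd c (\<lambda>y. 0) x"
      by (rule pd_local[OF U_open x]) (simp add: NE)
    have pN2: "pd c (\<lambda>y. \<Sum>e\<in>UNIV. nup g \<sigma> y e * Eten g cG y e b) x
       = (\<Sum>e\<in>UNIV. (\<Sum>a\<in>UNIV. pd c (\<lambda>y. ginv g y e a) x * nlow g \<sigma> x a + ginv g x e a * pd c (\<lambda>y. nlow g \<sigma> y a) x) * Eten g cG x e b
            + nup g \<sigma> x e * pd c (\<lambda>y. Eten g cG y e b) x)"
      unfolding nup_def using x by (simp add: pd_rules2)
    have "(\<Sum>e\<in>UNIV. (\<Sum>a\<in>UNIV. ginv g x e a * cov1 g (nlow g \<sigma>) x c a) * Eten g cG x e b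
      + nup g \<sigma> x e * cov2 g (Eten g cG) x c e b)
      = (\<Sum>e\<in>UNIV. (\<Sum>a\<in>UNIV. pd c (\<lambda>y. ginv g y e a) x * nlow g \<sigma> x a + ginv g x e a * pd c (\<lambda>y. nlow g \<sigma> y a) x) * Eten g cG x e b
            + nup g \<sigma> x e * pd c (\<lambda>y. Eten g cG y e b) x)
        - (\<Sum>k\<in>UNIV. christoffel g x k c b * (\<Sum>e\<in>UNIV. nup g \<sigma> x e * Eten g cG x e k))"
      unfolding cov1_def cov2_def
      by (rule leib_alg[where dgi="\<lambda>c a b. pd c (\<lambda>y. ginv g y a b) x"]) (rule dgi[OF x], simp add: nup_def)
    also have "\<dots> = 0" using pN pN2 NE[OF x] by simp
    finally show ?thesis .
  qed
  have cEs: "cov2 g (Eten g cG) x c e b = cov2 g (Eten g cG) x c b e" for c e b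
  proof -
    have "pd c (\<lambda>y. Eten g cG y e b) x = pd c (\<lambda>y. Eten g cG y b e) x"
      by (rule pd_local[OF U_open x]) (simp add: Es)
    then show ?thesis unfolding cov2_def using Es[OF x] by simp
  qed
  have c1: "(\<Sum>a\<in>UNIV. \<Sum>b\<in>UNIV. extr_up g \<sigma> \<epsilon> x a b * E_EVOL g cG \<sigma> \<epsilon> \<kappa> x a b) = 0"
    unfolding EV[OF x] extr_up_def extr_def hmix_def
    by (rule claim1_alg[where gi="ginv g x" and nl="nlow g \<sigma> x"])
      (rule ginv_sym[OF x], simp add: nup_def, rule Es[OF x], rule NE[OF x], rule leib,
       rule divE[unfolded divg_def], rule cEs)
  have covEV: "cov2 g (E_EVOL g cG \<sigma> \<epsilon> \<kappa>) x = cov2 g (Eten g cG) x"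
  proof (intro ext)
    fix c a b
    have "pd c (\<lambda>y. E_EVOL g cG \<sigma> \<epsilon> \<kappa> y a b) x = pd c (\<lambda>y. Eten g cG y a b) x"
      by (rule pd_local[OF U_open x]) (simp add: EV)
    then show "cov2 g (E_EVOL g cG \<sigma> \<epsilon> \<kappa>) x c a b = cov2 g (Eten g cG) x c a b"
      unfolding cov2_def using EV[OF x] by simp
  qed
  have c2: "Ddiv g \<sigma> \<epsilon> (E_EVOL g cG \<sigma> \<epsilon> \<kappa>) x b
          - \<epsilon> * (\<Sum>a\<in>UNIV. accel_up g \<sigma> x a * E_EVOL g cG \<sigma> \<epsilon> \<kappa> x a b) = 0" for b
    unfolding Ddiv_def Dspat_def covEV EV[OF x] hup_def hmix_def accel_up_def accel_def
    by (rule claim2_alg[where gi="ginv g x" and nl="nlow g \<sigma> x" and nu="nup g \<sigma> x"])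
      (rule ginv_sym[OF x], simp add: nup_def, rule Es[OF x], rule NE[OF x], rule leib,
       rule divE[unfolded divg_def], rule eps2, rule nn[OF x])
  show ?thesis using c1 c2 by blast
qed

end



theorem lemma3p2:
  fixes U :: "(real^'d::finite) set"
    and g :: "real^'d \<Rightarrow> 'd \<Rightarrow> 'd \<Rightarrow> real"
    and cG :: "real^'d \<Rightarrow> 'd \<Rightarrow> 'd \<Rightarrow> real"
    and \<sigma> :: "real^'d \<Rightarrow> real"
    and \<epsilon> \<kappa> :: real
  assumes dim: "CARD('d) \<ge> 3"
    and U_open: "open U"
    and g_smooth: "\<And>a b. smooth_on U (\<lambda>x. g x a b)"
    and g_sym: "\<And>x a b. x \<in> U \<Longrightarrow> g x a b = g x b a"
    and g_sig: "\<And>x. x \<in> U \<Longrightarrow> eucl_or_lorentz g x"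
    and \<sigma>_smooth: "smooth_on U \<sigma>"
    and \<sigma>_grad: "\<And>x. x \<in> U \<Longrightarrow> (\<exists>a. pd a \<sigma> x \<noteq> 0)"
    and \<epsilon>_val: "\<epsilon> = 1 \<or> \<epsilon> = -1"
    and \<epsilon>_norm: "\<And>x. x \<in> U \<Longrightarrow> \<epsilon> * gradsq g \<sigma> x > 0"
    and cG_smooth: "\<And>a b. smooth_on U (\<lambda>x. cG x a b)"
    and cG_sym: "\<And>x a b. x \<in> U \<Longrightarrow> cG x a b = cG x b a"
    and cG_div: "\<And>x b. x \<in> U \<Longrightarrow> divg g cG x b = 0"
    and EH0: "\<And>x. x \<in> U \<Longrightarrow> E_H g cG \<sigma> x = 0"
    and EM0: "\<And>x b. x \<in> U \<Longrightarrow> E_M g cG \<sigma> \<epsilon> x b = 0"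
  shows "\<forall>x\<in>U.
     (\<Sum>a\<in>UNIV. \<Sum>b\<in>UNIV. extr_up g \<sigma> \<epsilon> x a b * E_EVOL g cG \<sigma> \<epsilon> \<kappa> x a b) = 0 \<and>
     (\<forall>b. Ddiv g \<sigma> \<epsilon> (E_EVOL g cG \<sigma> \<epsilon> \<kappa>) x b
          - \<epsilon> * (\<Sum>a\<in>UNIV. accel_up g \<sigma> x a * E_EVOL g cG \<sigma> \<epsilon> \<kappa> x a b) = 0)"
proof -
  interpret geo U g using U_open g_smooth g_sym g_sig by unfold_locales auto
  show ?thesis
    by (intro ballI) (rule main_geo[OF \<sigma>_smooth \<epsilon>_val \<epsilon>_norm cG_smooth cG_sym cG_div EH0 EM0])
qed

end
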